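(* Let $k$ be a field, $(C,\Delta)$ a coassociative coalgebra over $k$, and $(L,B)$ a Lie–Rinehart pair. Let $n\ge0$ and $f\in Alt^n(L,B)$ be such that its induced map $F$ is $Hom(C,B)$-linear. Then $\delta F$, i.e. the map induced by $df\in Alt^{n+1}(L,B)$, is $Hom(C,B)$-linear. Consequently the $Hom(C,B)$-linear elements of the TD Chevalley–Eilenberg complex $(TDalt^\bullet(Hom(C,L),Hom(C,B)),\delta)$ form a subcomplex (the TD Lie–Rinehart complex).
   Context: A Lie–Rinehart pair $(L,B)$: $(L,\phi)$ is a Lie algebra with $\phi(x,y)=[x,y]$; $(B,\nu)$ is an associative algebra with $\nu(a,b)=ab$; $L$ is a left $B$-module via $\mu:B\otimes L\to L$, $\mu(a,x)=ax$; $B$ is a Lie module over $L$ via $\psi:L\otimes B\to B$ with $\psi(x,ab)=a\psi(x,b)+\psi(x,a)b$; and $\psi(ax,b)=a\psi(x,b)$ and $[x,ay]=\psi(x,a)y+a[x,y]$ for all $a,b\in B$, $x,y\in L$. Iterated coproduct $\Delta^{(m-1)}:C\to C^{\otimes m}$, $\Delta^{(0)}=\mathrm{id}$, $\Delta^{(m-1)}=(\Delta\otimes1\otimes\dots\otimes1)\circ\Delta^{(m-2)}$, written $\sum c_{(1)}\otimes\dots\otimes c_{(m)}$. $Alt^n(L,B)$: skew symmetric linear maps $L^{\otimes n}\to B$, $Alt^0(L,B)=B$. The map induced by $f\in Alt^n(L,B)$ is $F(g_1\otimes\dots\otimes g_n)(c)=\sum f(g_1(c_{(1)})\otimes\dots\otimes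 g_n(c_{(n)}))$ for $g_j\in Hom(C,L)$. Chevalley–Eilenberg differential: $df(x_1,\dots,x_{n+1})=\sum_{i}(-1)^{i+1}\psi(x_i,f(x_1,\dots,\hat{x_i},\dots,x_{n+1}))+\sum_{j<k}(-1)^{j+k}f([x_j,x_k],x_1,\dots,\hat{x_j},\dots,\hat{x_k},\dots,x_{n+1})$; the TD differential $\delta F$ of the induced map $F$ is the map induced by $df$. Let $\bar\mu:Hom(C,B)\otimes Hom(C,L)\to Hom(C,L)$, $\bar\mu(\beta,g)(c)=\sum\beta(c_{(1)})g(c_{(2)})$. The induced map $F$ of $f\in Alt^n(L,B)$ is called $Hom(C,B)$-linear if for every $1\le i\le n$, all $\beta\in Hom(C,B)$, $g_1,\dots,g_n\in Hom(C,L)$ and $c\in C$ (with $\Delta^{(n)}(c)=\sum c_{(1)}\otimes\dots\otimes c_{(n+1)}$): $$F(g_1,\dots,g_{i-1},\bar\mu(\beta,g_i),g_{i+1},\dots,g_n)(c)=\sum\beta(c_{(i)})\,f\big(g_1(c_{(1)}),\dots,g_{i-1}(c_{(i-1)}),g_i(c_{(i+1)}),\dots,g_n(c_{(n+1)})\big),$$ where the left side equals $\sum f(g_1(c_{(1)}),\dots,g_{i-1}(c_{(i-1)}),\beta(c_{(i)})g_i(c_{(i+1)}),g_{i+1}(c_{(i+2)}),\dots,g_n(c_{(n+1)}))$. (For $n=0$ the condition is vacuous.) *)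

theory Defs
  imports Main "HOL.Vector_Spaces"
begin

text \<open>Vector spaces over a field 'k are encoded by their scalar multiplications
  (locale vector_space).  Multilinear maps in n arguments are functions on lists
  of length n, linear in every position.\<close>

definition multilinear ::
  "('k::field \<Rightarrow> 'v::ab_group_add \<Rightarrow> 'v) \<Rightarrow> ('k \<Rightarrow> 'w::ab_group_add \<Rightarrow> 'w) \<Rightarrow> nat \<Rightarrow> ('v list \<Rightarrow> 'w) \<Rightarrow> bool" where
  "multilinear sV sW n f \<longleftrightarrow>
     (\<forall>xs i. length xs = n \<and> i < n \<longrightarrow> Vector_Spaces.linear sV sW (\<lambda>x. f (xs[i := x])))"

definition skew :: "nat \<Rightarrow> ('v list \<Rightarrow> 'w::ab_group_add) \<Rightarrow> bool" where
  "skew n f \<longleftrightarrow>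
     (\<forall>xs i j. length xs = n \<and> i < n \<and> j < n \<and> i \<noteq> j \<longrightarrow>
        f (xs[i := xs ! j, j := xs ! i]) = - f xs)"

definition Alt ::
  "('k::field \<Rightarrow> 'l::ab_group_add \<Rightarrow> 'l) \<Rightarrow> ('k \<Rightarrow> 'b::ab_group_add \<Rightarrow> 'b) \<Rightarrow> nat \<Rightarrow> ('l list \<Rightarrow> 'b) \<Rightarrow> bool" where
  "Alt sL sB n f \<longleftrightarrow> multilinear sL sB n f \<and> skew n f"

text \<open>Equality of two formal sums of elementary tensors in V^{\<otimes>m} (each term a list of
  length m), tested against all m-linear functionals into the ground field.\<close>
definition tensor_eq ::
  "('k::field \<Rightarrow> 'v::ab_group_add \<Rightarrow> 'v) \<Rightarrow> nat \<Rightarrow> 'v list list \<Rightarrow> 'v list list \<Rightarrow> bool" where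
  "tensor_eq sV m ts us \<longleftrightarrow>
     (\<forall>h. multilinear sV ((*) :: 'k \<Rightarrow> 'k \<Rightarrow> 'k) m h \<longrightarrow>
          sum_list (map h ts) = sum_list (map h us))"

text \<open>A coproduct is given in Sweedler form: \<Delta> c is a list of pairs (c1,c2) representing
  \<Sum> c1 \<otimes> c2.\<close>
definition pl :: "'c \<times> 'c \<Rightarrow> 'c list" where "pl p = [fst p, snd p]"

definition coalgebra ::
  "('k::field \<Rightarrow> 'c::ab_group_add \<Rightarrow> 'c) \<Rightarrow> ('c \<Rightarrow> ('c \<times> 'c) list) \<Rightarrow> bool" where
  "coalgebra sC \<Delta> \<longleftrightarrow>
     vector_space sC \<and>
     \<comment> \<open>\<Delta> is k-linear C \<rightarrow> C \<otimes> C\<close>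
     (\<forall>a c c'. tensor_eq sC 2 (map pl (\<Delta> (sC a c + c')))
                 (map (\<lambda>p. [sC a (fst p), snd p]) (\<Delta> c) @ map pl (\<Delta> c'))) \<and>
     \<comment> \<open>coassociativity (\<Delta> \<otimes> 1) \<Delta> = (1 \<otimes> \<Delta>) \<Delta>\<close>
     (\<forall>c. tensor_eq sC 3
            (concat (map (\<lambda>p. map (\<lambda>q. [fst q, snd q, snd p]) (\<Delta> (fst p))) (\<Delta> c)))
            (concat (map (\<lambda>p. map (\<lambda>q. [fst p, fst q, snd q]) (\<Delta> (snd p))) (\<Delta> c))))"

text \<open>Iterated coproduct: itcop \<Delta> m c represents \<Delta>^{(m)} c \<in> C^{\<otimes>(m+1)},
  with \<Delta>^{(0)} = id and \<Delta>^{(m)} = (\<Delta> \<otimes> 1 \<otimes> ... \<otimes> 1) \<circ> \<Delta>^{(m-1)}.\<close>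
fun itcop :: "('c \<Rightarrow> ('c \<times> 'c) list) \<Rightarrow> nat \<Rightarrow> 'c \<Rightarrow> 'c list list" where
  "itcop \<Delta> 0 c = [[c]]"
| "itcop \<Delta> (Suc m) c =
     concat (map (\<lambda>t. map (\<lambda>q. fst q # snd q # tl t) (\<Delta> (hd t))) (itcop \<Delta> m c))"

definition del :: "nat \<Rightarrow> 'a list \<Rightarrow> 'a list" where
  "del i xs = take i xs @ drop (Suc i) xs"

definition bilinear ::
  "('k::field \<Rightarrow> 'u::ab_group_add \<Rightarrow> 'u) \<Rightarrow> ('k \<Rightarrow> 'v::ab_group_add \<Rightarrow> 'v) \<Rightarrow>
   ('k \<Rightarrow> 'w::ab_group_add \<Rightarrow> 'w) \<Rightarrow> ('u \<Rightarrow> 'v \<Rightarrow> 'w) \<Rightarrow> bool" where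
  "bilinear sU sV sW h \<longleftrightarrow>
     (\<forall>y. Vector_Spaces.linear sU sW (\<lambda>x. h x y)) \<and> (\<forall>x. Vector_Spaces.linear sV sW (h x))"

definition lie_rinehart ::
  "('k::field \<Rightarrow> 'l::ab_group_add \<Rightarrow> 'l) \<Rightarrow> ('k \<Rightarrow> 'b::ab_group_add \<Rightarrow> 'b) \<Rightarrow>
   ('l \<Rightarrow> 'l \<Rightarrow> 'l) \<Rightarrow> ('b \<Rightarrow> 'b \<Rightarrow> 'b) \<Rightarrow> ('b \<Rightarrow> 'l \<Rightarrow> 'l) \<Rightarrow> ('l \<Rightarrow> 'b \<Rightarrow> 'b) \<Rightarrow> bool" where
  "lie_rinehart sL sB br mB \<mu> \<psi> \<longleftrightarrow>
     vector_space sL \<and> vector_space sB \<and>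
     \<comment> \<open>(L, br) Lie algebra\<close>
     bilinear sL sL sL br \<and> (\<forall>x. br x x = 0) \<and>
     (\<forall>x y z. br x (br y z) + br y (br z x) + br z (br x y) = 0) \<and>
     \<comment> \<open>(B, mB) associative algebra\<close>
     bilinear sB sB sB mB \<and> (\<forall>a b c. mB (mB a b) c = mB a (mB b c)) \<and>
     \<comment> \<open>L left B-module via \<mu>\<close>
     bilinear sB sL sL \<mu> \<and> (\<forall>a b x. \<mu> (mB a b) x = \<mu> a (\<mu> b x)) \<and>
     \<comment> \<open>B Lie module over L via \<psi>, acting by derivations\<close>
     bilinear sL sB sB \<psi> \<and>
     (\<forall>x y a. \<psi> (br x y) a = \<psi> x (\<psi> y a) - \<psi> y (\<psi> x a)) \<and>
     (\<forall>x a b. \<psi> x (mB a b) = mB a (\<psi> x b) + mB (\<psi> x a) b) \<and>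
     \<comment> \<open>compatibility conditions\<close>
     (\<forall>a x b. \<psi> (\<mu> a x) b = mB a (\<psi> x b)) \<and>
     (\<forall>x a y. br x (\<mu> a y) = \<mu> (\<psi> x a) y + \<mu> a (br x y))"

text \<open>Chevalley--Eilenberg differential (indices 0-based; the argument list has length n+1).\<close>
definition ce_diff ::
  "('k::field \<Rightarrow> 'b::ab_group_add \<Rightarrow> 'b) \<Rightarrow> ('l \<Rightarrow> 'l \<Rightarrow> 'l) \<Rightarrow> ('l \<Rightarrow> 'b \<Rightarrow> 'b) \<Rightarrow>
   ('l list \<Rightarrow> 'b) \<Rightarrow> 'l list \<Rightarrow> 'b" where
  "ce_diff sB br \<psi> f xs =
     (\<Sum>i<length xs. sB ((-1) ^ i) (\<psi> (xs ! i) (f (del i xs)))) +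
     (\<Sum>k<length xs. \<Sum>j<k.
        sB ((-1) ^ (j + k)) (f (br (xs ! j) (xs ! k) # del j (del k xs))))"

definition induced ::
  "('c \<Rightarrow> ('c \<times> 'c) list) \<Rightarrow> ('l list \<Rightarrow> 'b::ab_group_add) \<Rightarrow> ('c \<Rightarrow> 'l) list \<Rightarrow> 'c \<Rightarrow> 'b" where
  "induced \<Delta> f gs c =
     sum_list (map (\<lambda>t. f (map2 (\<lambda>g x. g x) gs t)) (itcop \<Delta> (length gs - 1) c))"

definition mu_bar ::
  "('c \<Rightarrow> ('c \<times> 'c) list) \<Rightarrow> ('b \<Rightarrow> 'l \<Rightarrow> 'l::ab_group_add) \<Rightarrow> ('c \<Rightarrow> 'b) \<Rightarrow> ('c \<Rightarrow> 'l) \<Rightarrow> 'c \<Rightarrow> 'l" where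
  "mu_bar \<Delta> \<mu> \<beta> g c = sum_list (map (\<lambda>p. \<mu> (\<beta> (fst p)) (g (snd p))) (\<Delta> c))"

definition hom_linear ::
  "('k::field \<Rightarrow> 'c::ab_group_add \<Rightarrow> 'c) \<Rightarrow> ('k \<Rightarrow> 'l::ab_group_add \<Rightarrow> 'l) \<Rightarrow>
   ('k \<Rightarrow> 'b::ab_group_add \<Rightarrow> 'b) \<Rightarrow> ('c \<Rightarrow> ('c \<times> 'c) list) \<Rightarrow> ('b \<Rightarrow> 'b \<Rightarrow> 'b) \<Rightarrow>
   ('b \<Rightarrow> 'l \<Rightarrow> 'l) \<Rightarrow> nat \<Rightarrow> ('l list \<Rightarrow> 'b) \<Rightarrow> bool" where
  "hom_linear sC sL sB \<Delta> mB \<mu> n f \<longleftrightarrow>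
     (\<forall>i \<beta> gs c. i < n \<and> length gs = n \<and> Vector_Spaces.linear sC sB \<beta> \<and>
        (\<forall>g\<in>set gs. Vector_Spaces.linear sC sL g) \<longrightarrow>
        induced \<Delta> f (gs[i := mu_bar \<Delta> \<mu> \<beta> (gs ! i)]) c =
        sum_list (map (\<lambda>t. mB (\<beta> (t ! i)) (f (map2 (\<lambda>g x. g x) gs (del i t))))
                      (itcop \<Delta> n c)))"

end

theory Submission
  imports Defs
begin


lemma K_vs: "vector_space ((*) :: 'k::field \<Rightarrow> 'k \<Rightarrow> 'k)"
  by unfold_locales (auto simp: algebra_simps)

lemma lin_add: "Vector_Spaces.linear s1 s2 f \<Longrightarrow> f (x + y) = f x + f y"
  by (simp add: linear_iff)
lemma lin_scale: "Vector_Spaces.linear s1 s2 f \<Longrightarrow> f (s1 c x) = s2 c (f x)"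
  by (simp add: linear_iff)
lemma lin_mh: "Vector_Spaces.linear s1 s2 f \<Longrightarrow> module_hom s1 s2 f"
  by (simp add: module_hom_iff_linear)
lemma lin_zero: "Vector_Spaces.linear s1 s2 f \<Longrightarrow> f 0 = 0"
  using module_hom.zero[OF lin_mh] .
lemma lin_neg: "Vector_Spaces.linear s1 s2 f \<Longrightarrow> f (- x) = - f x"
  using module_hom.neg[OF lin_mh] .
lemma lin_diff: "Vector_Spaces.linear s1 s2 f \<Longrightarrow> f (x - y) = f x - f y"
  using module_hom.diff[OF lin_mh] .
lemma lin_sum: "Vector_Spaces.linear s1 s2 f \<Longrightarrow> f (sum g S) = (\<Sum>a\<in>S. f (g a))"
  using module_hom.sum[OF lin_mh] .
lemma lin_sum_list: "Vector_Spaces.linear s1 s2 f \<Longrightarrow>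
   f (sum_list (map g xs)) = sum_list (map (\<lambda>x. f (g x)) xs)"
  by (induction xs) (auto simp: lin_add lin_zero)
lemma lin_vs1: "Vector_Spaces.linear s1 s2 f \<Longrightarrow> vector_space s1"
  by (simp add: linear_iff)
lemma lin_vs2: "Vector_Spaces.linear s1 s2 f \<Longrightarrow> vector_space s2"
  by (simp add: linear_iff)

lemma linI:
  assumes "vector_space s1" "vector_space s2"
    "\<And>x y. f (x + y) = f x + f y" "\<And>c x. f (s1 c x) = s2 c (f x)"
  shows "Vector_Spaces.linear s1 s2 f"
  using assms by (simp add: linear_iff)

lemma lin_comp: "Vector_Spaces.linear s1 s2 f \<Longrightarrow> Vector_Spaces.linear s2 s3 g \<Longrightarrow>
   Vector_Spaces.linear s1 s3 (\<lambda>x. g (f x))"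
  using Vector_Spaces.linear_compose[of s1 s2 f s3 g] by (simp add: o_def)

lemma lin_addf: "Vector_Spaces.linear s1 s2 f \<Longrightarrow> Vector_Spaces.linear s1 s2 g \<Longrightarrow>
   Vector_Spaces.linear s1 s2 (\<lambda>x. f x + g x)"
  apply (rule linI)
     apply (auto simp: lin_vs1 lin_vs2 lin_add lin_scale)
  apply (simp add: vector_space.vector_space_assms(1)[OF lin_vs2])
  done

lemma vs_mod: "vector_space s \<Longrightarrow> module s"
  by (simp add: module_iff_vector_space)

lemma lin_const0: "vector_space s1 \<Longrightarrow> vector_space s2 \<Longrightarrow> Vector_Spaces.linear s1 s2 (\<lambda>x. 0)"
  by (rule linI) (auto simp: module.scale_zero_right[OF vs_mod])

lemma lin_scalef: "Vector_Spaces.linear s1 s2 f \<Longrightarrow> Vector_Spaces.linear s1 s2 (\<lambda>x. s2 c (f x))"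
  apply (rule linI)
  apply (auto simp: lin_vs1 lin_vs2 lin_add lin_scale)
  using lin_vs2 vector_space.vector_space_assms(1) apply blast
  by (metis lin_vs2 mult.commute vector_space.vector_space_assms(3))

lemma lin_sum_fun: "vector_space s1 \<Longrightarrow> vector_space s2 \<Longrightarrow> (\<And>a. a \<in> S \<Longrightarrow> Vector_Spaces.linear s1 s2 (F a)) \<Longrightarrow>
   Vector_Spaces.linear s1 s2 (\<lambda>x. \<Sum>a\<in>S. F a x)"
proof (induction S rule: infinite_finite_induct)
  case (infinite A) then show ?case by (simp add: lin_const0)
next
  case empty then show ?case by (simp add: lin_const0)
next
  case (insert x F) then show ?case by (simp add: lin_addf)
qed

lemma lin_sum_list_fun: "vector_space s1 \<Longrightarrow> vector_space s2 \<Longrightarrow> (\<And>a. a \<in> set ps \<Longrightarrow> Vector_Spaces.linear s1 s2 (F a)) \<Longrightarrow>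
   Vector_Spaces.linear s1 s2 (\<lambda>x. sum_list (map (\<lambda>a. F a x) ps))"
  by (induction ps) (auto simp: lin_const0 lin_addf)

lemma sep_functional:
  assumes vs: "vector_space sW" and w: "w \<noteq> 0"
  shows "\<exists>\<phi>. Vector_Spaces.linear sW ((*) :: 'k::field \<Rightarrow> 'k \<Rightarrow> 'k) \<phi> \<and> \<phi> w = 1"
proof -
  interpret vector_space_pair sW "(*) :: 'k \<Rightarrow> 'k \<Rightarrow> 'k"
    using vs K_vs by (simp add: vector_space_pair_def)
  have "vs1.independent {w}" using w by simp
  from linear_independent_extend[OF this, of "\<lambda>_. 1"] show ?thesis by auto
qed

lemma mlI: "(\<And>xs i. length xs = n \<Longrightarrow> i < n \<Longrightarrow> Vector_Spaces.linear sV sW (\<lambda>x. M (xs[i := x])))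
   \<Longrightarrow> multilinear sV sW n M"
  by (auto simp: multilinear_def)

lemma ml_lin: "multilinear sV sW n M \<Longrightarrow> length xs = n \<Longrightarrow> i < n \<Longrightarrow>
   Vector_Spaces.linear sV sW (\<lambda>x. M (xs[i := x]))"
  by (auto simp: multilinear_def)

lemma ml_add: "multilinear sV sW n M \<Longrightarrow> length xs = n \<Longrightarrow> i < n \<Longrightarrow>
   M (xs[i := x + y]) = M (xs[i := x]) + M (xs[i := y])"
  using lin_add[OF ml_lin] by blast

lemma ml_scale: "multilinear sV sW n M \<Longrightarrow> length xs = n \<Longrightarrow> i < n \<Longrightarrow>
   M (xs[i := sV a x]) = sW a (M (xs[i := x]))"
  using lin_scale[OF ml_lin] by blast

lemma ml_cons0: "multilinear sV sW (Suc n) M \<Longrightarrow> length R = n \<Longrightarrow>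
   Vector_Spaces.linear sV sW (\<lambda>x. M (x # R))"
  using ml_lin[of sV sW "Suc n" M "undefined # R" 0] by simp

lemma ml_tail: "multilinear sV sW (Suc n) M \<Longrightarrow> multilinear sV sW n (\<lambda>zs. M (y # zs))"
  apply (rule mlI)
  subgoal for xs i using ml_lin[of sV sW "Suc n" M "y # xs" "Suc i"] by simp
  done

lemma ml_app: "multilinear sV sW (length P + k + length D) M \<Longrightarrow> multilinear sV sW k (\<lambda>zs. M (P @ zs @ D))"
  apply (rule mlI)
  subgoal for xs i using ml_lin[of sV sW "length P + k + length D" M "P @ xs @ D" "length P + i"]
    by (simp add: list_update_append)
  done

lemma ml_comp: "multilinear sV sW n M \<Longrightarrow> Vector_Spaces.linear sW sU \<phi> \<Longrightarrow>
   multilinear sV sU n (\<lambda>x. \<phi> (M x))"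
  apply (rule mlI)
  subgoal for xs i using lin_comp[OF ml_lin[of sV sW n M xs i], of sU \<phi>] by auto
  done

lemma scale_sum_list_left: "vector_space s \<Longrightarrow> sum_list (map (\<lambda>x. s (a x) v) X) = s (sum_list (map a X)) v"
  by (induction X) (auto simp: module.scale_zero_left[OF vs_mod] module.scale_left_distrib[OF vs_mod])

lemma scale_sum_list_right: "vector_space s \<Longrightarrow> s c (sum_list (map g X)) = sum_list (map (\<lambda>x. s c (g x)) X)"
  by (induction X) (auto simp: module.scale_zero_right[OF vs_mod] module.scale_right_distrib[OF vs_mod])

lemma sum_list_sum_swap: "sum_list (map (\<lambda>x. \<Sum>e\<in>E. F x e) X) = (\<Sum>e\<in>E. sum_list (map (\<lambda>x. F x e) X))"
  by (induction X) (auto simp: sum.distrib)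

lemma sum_list_swap:
  fixes F :: "'p \<Rightarrow> 'q \<Rightarrow> 'a::comm_monoid_add"
  shows "sum_list (map (\<lambda>p. sum_list (map (\<lambda>q. F p q) B)) A) =
   sum_list (map (\<lambda>q. sum_list (map (\<lambda>p. F p q) A)) B)"
proof (induction A)
  case (Cons a A)
  have "sum_list (map (\<lambda>q. F a q + sum_list (map (\<lambda>p. F p q) A)) B) =
     sum_list (map (\<lambda>q. F a q) B) + sum_list (map (\<lambda>q. sum_list (map (\<lambda>p. F p q) A)) B)"
    by (induction B) (auto simp: add_ac)
  then show ?case using Cons by simp
qed (induction B; simp)

lemma sum_list_concat_map: "sum_list (map M (concat (map F X))) = sum_list (map (\<lambda>s. sum_list (map M (F s))) X)"
  by (induction X) auto

definition prodf :: "('c \<Rightarrow> 'k::field) list \<Rightarrow> 'c list \<Rightarrow> 'k" where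
  "prodf \<phi>s t = prod_list (map2 (\<lambda>\<phi> x. \<phi> x) \<phi>s t)"

lemma prodf_Nil[simp]: "prodf [] t = 1" by (simp add: prodf_def)
lemma prodf_Cons[simp]: "prodf (\<phi> # \<phi>s) (x # t) = \<phi> x * prodf \<phi>s t" by (simp add: prodf_def)

lemma lin_mult_right: "Vector_Spaces.linear sC (*) \<phi> \<Longrightarrow> Vector_Spaces.linear sC ((*) :: 'k::field \<Rightarrow> _) (\<lambda>x. \<phi> x * c)"
  by (rule linI) (auto simp: lin_vs1 K_vs lin_add lin_scale algebra_simps)

lemma lin_mult_left: "Vector_Spaces.linear sC (*) \<phi> \<Longrightarrow> Vector_Spaces.linear sC ((*) :: 'k::field \<Rightarrow> _) (\<lambda>x. c * \<phi> x)"
  by (rule linI) (auto simp: lin_vs1 K_vs lin_add lin_scale algebra_simps)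

lemma prodf_ml:
  fixes sC :: "'k::field \<Rightarrow> 'c::ab_group_add \<Rightarrow> 'c" and \<phi>s :: "('c \<Rightarrow> 'k) list"
  shows "vector_space sC \<Longrightarrow> (\<forall>\<phi>\<in>set \<phi>s. Vector_Spaces.linear sC ((*) :: 'k::field \<Rightarrow> _) \<phi>) \<Longrightarrow>
  multilinear sC (*) (length \<phi>s) (prodf \<phi>s)"
proof (induction \<phi>s)
  case Nil then show ?case by (simp add: multilinear_def)
next
  case (Cons \<phi> \<phi>s)
  show ?case
  proof (rule mlI)
    fix xs :: "'c list" and i assume l: "length xs = length (\<phi> # \<phi>s)" and i: "i < length (\<phi> # \<phi>s)"
    then obtain x0 xr where xs: "xs = x0 # xr" by (cases xs) auto
    show "Vector_Spaces.linear sC (*) (\<lambda>x. prodf (\<phi> # \<phi>s) (xs[i := x]))"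
    proof (cases i)
      case 0 then show ?thesis using Cons by (simp add: xs lin_mult_right)
    next
      case (Suc j)
      have "Vector_Spaces.linear sC (*) (\<lambda>x. prodf \<phi>s (xr[j := x]))"
        using ml_lin[OF Cons.IH] Cons.prems l i xs Suc by auto
      then show ?thesis using Suc xs by (simp add: lin_mult_left)
    qed
  qed
qed

lemma ml_scaled_list:
  assumes vsB: "vector_space sB"
  shows "\<And>as f. multilinear sL sB (length ys) f \<Longrightarrow> length as = length ys \<Longrightarrow>
    f (map2 sL as ys) = sB (prod_list as) (f ys)"
proof (induction ys)
  case Nil then show ?case by (simp add: vector_space.vector_space_assms(4)[OF vsB])
next
  case (Cons y ys)
  then obtain a ar where as: "as = a # ar" by (cases as) auto
  have "f (map2 sL as (y # ys)) = f ((y # map2 sL ar ys)[0 := sL a y])" by (simp add: as)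
  also have "\<dots> = sB a (f (y # map2 sL ar ys))"
    using ml_scale[OF Cons.prems(1), of "y # map2 sL ar ys" 0 a y] Cons.prems as by simp
  also have "f (y # map2 sL ar ys) = sB (prod_list ar) (f (y # ys))"
    using Cons.IH[of "\<lambda>zs. f (y # zs)" ar] ml_tail[of sL sB "length ys" f y] Cons.prems as by simp
  finally show ?case using as by (simp add: vector_space.vector_space_assms(3)[OF vsB])
qed

lemma transfer_teq:
  assumes vsV: "vector_space sV" and vsW: "vector_space sW"
    and teq: "tensor_eq sV m X Y" and M: "multilinear sV sW m M"
  shows "sum_list (map M X) = sum_list (map M Y)"
proof (rule ccontr)
  assume ne: "sum_list (map M X) \<noteq> sum_list (map M Y)"
  obtain \<phi> where \<phi>: "Vector_Spaces.linear sW ((*) :: 'a \<Rightarrow> _) \<phi>"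
     "\<phi> (sum_list (map M X) - sum_list (map M Y)) = 1"
    using sep_functional[OF vsW, of "sum_list (map M X) - sum_list (map M Y)"] ne by auto
  have "multilinear sV (*) m (\<lambda>x. \<phi> (M x))" using ml_comp[OF M \<phi>(1)] .
  then have "sum_list (map (\<lambda>x. \<phi> (M x)) X) = sum_list (map (\<lambda>x. \<phi> (M x)) Y)"
    using teq by (auto simp: tensor_eq_def)
  then have "\<phi> (sum_list (map M X) - sum_list (map M Y)) = 0"
    by (simp add: lin_diff[OF \<phi>(1)] lin_sum_list[OF \<phi>(1), of "\<lambda>x. x", simplified] o_def)
  then show False using \<phi>(2) by simp
qed

section \<open>Product functionals detect vanishing\<close>

lemma coord_system:
  fixes sC :: "'k::field \<Rightarrow> 'c::ab_group_add \<Rightarrow> 'c"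
  assumes vsC: "vector_space sC" and U: "finite U"
  obtains E A where "finite E" "\<And>e. e \<in> E \<Longrightarrow> Vector_Spaces.linear sC ((*) :: 'k \<Rightarrow> _) (A e)"
    "\<And>u. u \<in> U \<Longrightarrow> u = (\<Sum>e\<in>E. sC (A e u) e)"
proof -
  interpret C: vector_space sC by fact
  interpret P: vector_space_pair sC "(*) :: 'k \<Rightarrow> 'k \<Rightarrow> 'k"
    using vsC K_vs by (simp add: vector_space_pair_def)
  interpret CC: vector_space_pair sC sC
    using vsC by (simp add: vector_space_pair_def)
  obtain E where E: "E \<subseteq> U" "C.independent E" "U \<subseteq> C.span E"
    using C.maximal_independent_subset by blast
  have fE: "finite E" using E(1) U finite_subset by blast
  have "\<forall>e. \<exists>\<phi>. Vector_Spaces.linear sC ((*) :: 'k \<Rightarrow> _) \<phi> \<and> (\<forall>x\<in>E. \<phi> x = (if x = e then 1 else 0))"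
  proof
    fix e show "\<exists>\<phi>. Vector_Spaces.linear sC ((*) :: 'k \<Rightarrow> _) \<phi> \<and> (\<forall>x\<in>E. \<phi> x = (if x = e then 1 else 0))"
      using P.linear_independent_extend[OF E(2), of "\<lambda>x. if x = e then 1 else 0"] by blast
  qed
  then obtain A where A: "\<And>e. Vector_Spaces.linear sC ((*) :: 'k \<Rightarrow> _) (A e)"
    "\<And>e x. x \<in> E \<Longrightarrow> A e x = (if x = e then 1 else 0)"
    by metis
  have linR: "Vector_Spaces.linear sC sC (\<lambda>u. \<Sum>e\<in>E. sC (A e u) e)"
  proof (rule lin_sum_fun[OF vsC vsC])
    fix e assume "e \<in> E"
    show "Vector_Spaces.linear sC sC (\<lambda>u. sC (A e u) e)"
      by (rule linI[OF vsC vsC]) (auto simp: lin_add[OF A(1)] lin_scale[OF A(1)] C.scale_left_distrib)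
  qed
  have "u = (\<Sum>e\<in>E. sC (A e u) e)" if "u \<in> U" for u
  proof (rule CC.linear_eq_on[of "\<lambda>u. u" _ u E])
    show "Vector_Spaces.linear sC sC (\<lambda>u. u)" using C.linear_id by (simp add: id_def)
    show "Vector_Spaces.linear sC sC (\<lambda>u. \<Sum>e\<in>E. sC (A e u) e)" by (fact linR)
    show "u \<in> C.span E" using that E(3) by blast
    fix b assume b: "b \<in> E"
    have "(\<Sum>e\<in>E. sC (A e b) e) = (\<Sum>e\<in>E. if b = e then e else 0)"
      by (rule sum.cong) (auto simp: A(2)[OF b])
    also have "\<dots> = b" using b fE by simp
    finally show "b = (\<Sum>e\<in>E. sC (A e b) e)" by simp
  qed
  then show ?thesis using that fE A(1) by blast
qed

lemma lemP:
  fixes sC :: "'k::field \<Rightarrow> 'c::ab_group_add \<Rightarrow> 'c" and sW :: "'k \<Rightarrow> 'w::ab_group_add \<Rightarrow> 'w"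
  assumes vsC: "vector_space sC" and vsW: "vector_space sW"
  shows "\<And>X M. (\<forall>x\<in>set X. length (snd x) = m) \<Longrightarrow>
    (\<forall>\<phi>s. length \<phi>s = m \<and> (\<forall>\<phi>\<in>set \<phi>s. Vector_Spaces.linear sC ((*) :: 'k \<Rightarrow> _) \<phi>) \<longrightarrow>
        sum_list (map (\<lambda>x. fst x * prodf \<phi>s (snd x)) X) = 0) \<Longrightarrow>
    multilinear sC sW m M \<Longrightarrow> sum_list (map (\<lambda>x. sW (fst x) (M (snd x))) X) = 0"
proof (induction m)
  case 0
  then have "sum_list (map fst X) = 0" by (auto simp: prodf_def)
  moreover have "sum_list (map (\<lambda>x. sW (fst x) (M (snd x))) X) = sum_list (map (\<lambda>x. sW (fst x) (M [])) X)"
    by (rule arg_cong[where f=sum_list], rule map_cong) (use 0 in auto)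
  ultimately show ?case
    by (simp add: scale_sum_list_left[OF vsW] module.scale_zero_left[OF vs_mod[OF vsW]])
next
  case (Suc m)
  interpret W: vector_space sW by fact
  obtain E A where E: "finite E" "\<And>e. e \<in> E \<Longrightarrow> Vector_Spaces.linear sC ((*) :: 'k \<Rightarrow> _) (A e)"
    "\<And>u. u \<in> set (map (\<lambda>x. hd (snd x)) X) \<Longrightarrow> u = (\<Sum>e\<in>E. sC (A e u) e)"
    using coord_system[OF vsC, of "set (map (\<lambda>x. hd (snd x)) X)"] by blast
  have step: "sW (fst x) (M (snd x)) = (\<Sum>e\<in>E. sW (fst x * A e (hd (snd x))) (M (e # tl (snd x))))"
    if x: "x \<in> set X" for x
  proof -
    have l: "length (snd x) = Suc m" using Suc.prems x by auto
    then have sx: "snd x = hd (snd x) # tl (snd x)" by (cases "snd x") auto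
    have lin: "Vector_Spaces.linear sC sW (\<lambda>y. M (y # tl (snd x)))"
      using ml_cons0[OF Suc.prems(3)] l by simp
    have hx: "hd (snd x) = (\<Sum>e\<in>E. sC (A e (hd (snd x))) e)" using E(3) x by auto
    have "M (snd x) = M (hd (snd x) # tl (snd x))" using sx by simp
    also have "\<dots> = M ((\<Sum>e\<in>E. sC (A e (hd (snd x))) e) # tl (snd x))"
      by (rule arg_cong[where f="\<lambda>y. M (y # tl (snd x))"], rule hx)
    also have "\<dots> = (\<Sum>e\<in>E. sW (A e (hd (snd x))) (M (e # tl (snd x))))"
      by (simp add: lin_sum[OF lin] lin_scale[OF lin])
    finally show ?thesis by (simp add: W.scale_sum_right)
  qed
  have "sum_list (map (\<lambda>x. sW (fst x) (M (snd x))) X) =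
      sum_list (map (\<lambda>x. \<Sum>e\<in>E. sW (fst x * A e (hd (snd x))) (M (e # tl (snd x)))) X)"
    by (rule arg_cong[where f=sum_list], rule map_cong) (use step in auto)
  also have "\<dots> = (\<Sum>e\<in>E. sum_list (map (\<lambda>x. sW (fst x * A e (hd (snd x))) (M (e # tl (snd x)))) X))"
    by (rule sum_list_sum_swap)
  also have "\<dots> = 0"
  proof (rule sum.neutral, rule ballI)
    fix e assume e: "e \<in> E"
    let ?X = "map (\<lambda>x. (fst x * A e (hd (snd x)), tl (snd x))) X"
    have "sum_list (map (\<lambda>x. sW (fst x) (M (e # snd x))) ?X) = 0"
    proof (rule Suc.IH)
      show "\<forall>x\<in>set ?X. length (snd x) = m" using Suc.prems(1) by auto
      show "multilinear sC sW m (\<lambda>zs. M (e # zs))" using ml_tail[OF Suc.prems(3)] .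
      show "\<forall>\<phi>s. length \<phi>s = m \<and> (\<forall>\<phi>\<in>set \<phi>s. Vector_Spaces.linear sC (*) \<phi>) \<longrightarrow>
         sum_list (map (\<lambda>x. fst x * prodf \<phi>s (snd x)) ?X) = 0"
      proof (intro allI impI)
        fix \<phi>s :: "('c \<Rightarrow> 'k) list" assume h: "length \<phi>s = m \<and> (\<forall>\<phi>\<in>set \<phi>s. Vector_Spaces.linear sC (*) \<phi>)"
        have eqx: "fst x * A e (hd (snd x)) * prodf \<phi>s (tl (snd x)) = fst x * prodf (A e # \<phi>s) (snd x)"
          if x: "x \<in> set X" for x
        proof -
          have "length (snd x) = Suc m" using Suc.prems x by auto
          then have sx: "snd x = hd (snd x) # tl (snd x)" by (cases "snd x") auto
          show ?thesis by (subst (2) sx) (simp add: mult.assoc)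
        qed
        have "sum_list (map (\<lambda>x. fst x * prodf \<phi>s (snd x)) ?X) =
           sum_list (map (\<lambda>x. fst x * prodf (A e # \<phi>s) (snd x)) X)"
          unfolding map_map o_def
          by (rule arg_cong[where f=sum_list], rule map_cong[OF refl]) (simp add: eqx)
        also have "\<dots> = 0" using Suc.prems(2) h E(2)[OF e] by auto
        finally show "sum_list (map (\<lambda>x. fst x * prodf \<phi>s (snd x)) ?X) = 0" .
      qed
    qed
    then show "sum_list (map (\<lambda>x. sW (fst x * A e (hd (snd x))) (M (e # tl (snd x)))) X) = 0"
      by (simp add: o_def)
  qed
  finally show ?case .
qed

section \<open>Coalgebra facts\<close>

locale COAL =
  fixes sC :: "'k::field \<Rightarrow> 'c::ab_group_add \<Rightarrow> 'c" and \<Delta> :: "'c \<Rightarrow> ('c \<times> 'c) list"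
  assumes coalg: "coalgebra sC \<Delta>"
begin

lemma vsC: "vector_space sC" using coalg by (simp add: coalgebra_def)

lemma Dlin_teq: "tensor_eq sC 2 (map pl (\<Delta> (sC a c + c')))
                 (map (\<lambda>p. [sC a (fst p), snd p]) (\<Delta> c) @ map pl (\<Delta> c'))"
  using coalg by (simp add: coalgebra_def)

lemma coassoc_teq: "tensor_eq sC 3
            (concat (map (\<lambda>p. map (\<lambda>q. [fst q, snd q, snd p]) (\<Delta> (fst p))) (\<Delta> c)))
            (concat (map (\<lambda>p. map (\<lambda>q. [fst p, fst q, snd q]) (\<Delta> (snd p))) (\<Delta> c)))"
  using coalg by (simp add: coalgebra_def)

definition split :: "nat \<Rightarrow> 'c list list \<Rightarrow> 'c list list" where
  "split i X = concat (map (\<lambda>s. map (\<lambda>p. take i s @ fst p # snd p # drop (Suc i) s) (\<Delta> (s ! i))) X)"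

definition teq :: "('k \<Rightarrow> 'w::ab_group_add \<Rightarrow> 'w) \<Rightarrow> nat \<Rightarrow> 'c list list \<Rightarrow> 'c list list \<Rightarrow> bool" where
  "teq sW m X Y \<longleftrightarrow> (\<forall>M. multilinear sC sW m M \<longrightarrow> sum_list (map M X) = sum_list (map M Y))"

lemma itcop_len: "t \<in> set (itcop \<Delta> m c) \<Longrightarrow> length t = Suc m"
  by (induction m arbitrary: t) auto

lemma itcop_Suc: "itcop \<Delta> (Suc m) c = split 0 (itcop \<Delta> m c)"
proof -
  have "\<And>t. t \<in> set (itcop \<Delta> m c) \<Longrightarrow>
     map (\<lambda>q. fst q # snd q # tl t) (\<Delta> (hd t)) = map (\<lambda>p. take 0 t @ fst p # snd p # drop (Suc 0) t) (\<Delta> (t ! 0))"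
  proof -
    fix t assume "t \<in> set (itcop \<Delta> m c)"
    then have "length t = Suc m" by (rule itcop_len)
    then show "map (\<lambda>q. fst q # snd q # tl t) (\<Delta> (hd t)) = map (\<lambda>p. take 0 t @ fst p # snd p # drop (Suc 0) t) (\<Delta> (t ! 0))"
      by (cases t) auto
  qed
  then show ?thesis unfolding split_def by (simp cong: map_cong)
qed

declare itcop.simps(2)[simp del]

lemma split_len: "(\<forall>s\<in>set X. length s = m) \<Longrightarrow> i < m \<Longrightarrow> t \<in> set (split i X) \<Longrightarrow> length t = Suc m"
  by (auto simp: split_def)

lemma sum_split: "sum_list (map M (split i X)) =
  sum_list (map (\<lambda>s. sum_list (map (\<lambda>p. M (take i s @ fst p # snd p # drop (Suc i) s)) (\<Delta> (s ! i)))) X)"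
  unfolding split_def sum_list_concat_map by (simp add: o_def)

lemma Dlin:
  fixes sW :: "'k \<Rightarrow> 'w::ab_group_add \<Rightarrow> 'w"
  assumes vsW: "vector_space sW" and h: "multilinear sC sW 2 h"
  shows "Vector_Spaces.linear sC sW (\<lambda>x. sum_list (map (\<lambda>p. h [fst p, snd p]) (\<Delta> x)))"
proof -
  interpret W: vector_space sW by fact
  interpret C: vector_space sC by (rule vsC)
  define D where "D x = sum_list (map (\<lambda>p. h [fst p, snd p]) (\<Delta> x))" for x
  have hs: "h [sC a x, y] = sW a (h [x, y])" for a x y
    using ml_scale[OF h, of "[x, y]" 0 a x] by simp
  have key: "D (sC a c + c') = sW a (D c) + D c'" for a c c'
  proof -
    have "sum_list (map h (map pl (\<Delta> (sC a c + c')))) =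
      sum_list (map h (map (\<lambda>p. [sC a (fst p), snd p]) (\<Delta> c) @ map pl (\<Delta> c')))"
      by (rule transfer_teq[OF vsC vsW Dlin_teq h])
    then show ?thesis
      by (simp add: D_def pl_def o_def hs scale_sum_list_right[OF vsW])
  qed
  have D0: "D 0 = 0" using key[of 1 0 0] by simp
  show ?thesis unfolding D_def[symmetric]
  proof (rule linI[OF vsC vsW])
    show "D (x + y) = D x + D y" for x y using key[of 1 x y] by simp
    show "D (sC a x) = sW a (D x)" for a x using key[of a x 0] D0 by simp
  qed
qed


lemma upd_split_list:
  assumes "length xs = m" "i < m" "j < m" "j \<noteq> i"
  shows "take i (xs[j := x]) @ a # b # drop (Suc i) (xs[j := x]) =
         (take i xs @ a # b # drop (Suc i) xs)[(if j < i then j else Suc j) := x]"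
proof (cases "j < i")
  case True
  have 1: "take i (xs[j := x]) = (take i xs)[j := x]" by (rule take_update_swap)
  have 2: "drop (Suc i) (xs[j := x]) = drop (Suc i) xs" using True by (intro drop_update_cancel) simp
  have 3: "(take i xs @ a # b # drop (Suc i) xs)[j := x] = (take i xs)[j := x] @ a # b # drop (Suc i) xs"
    by (rule list_update_append1) (use True assms in simp)
  show ?thesis unfolding 1 2 using 3 True by simp
next
  case False
  then have ji: "i < j" using assms by simp
  then obtain d where d: "j = Suc i + d" using less_imp_Suc_add[OF ji] by auto
  have 1: "take i (xs[j := x]) = take i xs" using ji by (intro take_update_cancel) simp
  have 2: "drop (Suc i) (xs[j := x]) = (drop (Suc i) xs)[d := x]"
    using drop_update_swap[of "Suc i" j xs x] d by simp
  have li: "length (take i xs) = i" using assms by simp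
  have 3: "(take i xs @ a # b # drop (Suc i) xs)[Suc j := x] = take i xs @ (a # b # drop (Suc i) xs)[Suc (Suc d) := x]"
    using list_update_append[of "take i xs" "a # b # drop (Suc i) xs" "Suc j" x] li d by simp
  show ?thesis unfolding 1 2 using 3 False by simp
qed

lemma split_ml:
  fixes sW :: "'k \<Rightarrow> 'w::ab_group_add \<Rightarrow> 'w"
  assumes vsW: "vector_space sW" and M: "multilinear sC sW (Suc m) M" and i: "i < m"
  shows "multilinear sC sW m (\<lambda>s. sum_list (map (\<lambda>p. M (take i s @ fst p # snd p # drop (Suc i) s)) (\<Delta> (s ! i))))"
proof (rule mlI)
  fix xs :: "'c list" and j assume l: "length xs = m" and j: "j < m"
  show "Vector_Spaces.linear sC sW (\<lambda>x. sum_list (map (\<lambda>p. M (take i (xs[j := x]) @ fst p # snd p # drop (Suc i) (xs[j := x]))) (\<Delta> (xs[j := x] ! i))))"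
  proof (cases "j = i")
    case True
    have h: "multilinear sC sW 2 (\<lambda>zs. M (take i xs @ zs @ drop (Suc i) xs))"
      by (rule ml_app) (use M l i in simp)
    have "Vector_Spaces.linear sC sW (\<lambda>x. sum_list (map (\<lambda>p. M (take i xs @ [fst p, snd p] @ drop (Suc i) xs)) (\<Delta> x)))"
      using Dlin[OF vsW h] by simp
    then show ?thesis using True l i by (simp add: take_update_cancel drop_update_cancel)
  next
    case False
    have "Vector_Spaces.linear sC sW (\<lambda>x. sum_list (map (\<lambda>p. M ((take i xs @ fst p # snd p # drop (Suc i) xs)[(if j < i then j else Suc j) := x])) (\<Delta> (xs ! i))))"
      by (rule lin_sum_list_fun[OF vsC vsW], rule ml_lin[OF M]) (use l i j in auto)
    then show ?thesis by (simp only: upd_split_list[OF l i j False] nth_list_update_neq[OF False])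
  qed
qed

lemma split_cong:
  fixes sW :: "'k \<Rightarrow> 'w::ab_group_add \<Rightarrow> 'w"
  assumes vsW: "vector_space sW" and i: "i < m" and t: "teq sW m X Y"
  shows "teq sW (Suc m) (split i X) (split i Y)"
  unfolding teq_def
proof (intro allI impI)
  fix M assume M: "multilinear sC sW (Suc m) M"
  show "sum_list (map M (split i X)) = sum_list (map M (split i Y))"
    unfolding sum_split using t split_ml[OF vsW M i] by (simp add: teq_def)
qed

lemma split_comm:
  fixes M :: "'c list \<Rightarrow> 'a::comm_monoid_add"
  assumes X: "\<forall>s\<in>set X. length s = m" and i: "Suc i < m"
  shows "sum_list (map M (split (Suc (Suc i)) (split 0 X))) = sum_list (map M (split 0 (split (Suc i) X)))"
  unfolding sum_split
  apply (rule arg_cong[where f=sum_list], rule map_cong[OF refl])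
  subgoal premises prems for s
  proof -
    have ls: "length s = m" using X prems by auto
    then obtain s0 sr where s0: "s = s0 # sr" using i by (cases s) auto
    have i': "i < length sr" using ls s0 i by simp
    show ?thesis using sum_list_swap[of "\<lambda>p q. M (fst p # snd p # take i sr @ fst q # snd q # drop (Suc i) sr)" "\<Delta> (sr ! i)" "\<Delta> s0"] i'
      by (simp add: s0)
  qed
  done

lemma split10:
  fixes sW :: "'k \<Rightarrow> 'w::ab_group_add \<Rightarrow> 'w"
  assumes vsW: "vector_space sW" and X: "\<forall>s\<in>set X. length s = Suc m"
    and M: "multilinear sC sW (Suc (Suc (Suc m))) M"
  shows "sum_list (map M (split 1 (split 0 X))) = sum_list (map M (split 0 (split 0 X)))"
  unfolding sum_split
  apply (rule arg_cong[where f=sum_list], rule map_cong[OF refl])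
  subgoal premises prems for s
  proof -
    have ls: "length s = Suc m" using X prems by auto
    then obtain s0 sr where s0: "s = s0 # sr" by (cases s) auto
    have h: "multilinear sC sW 3 (\<lambda>zs. M ([] @ zs @ sr))"
      by (rule ml_app) (use M ls s0 in \<open>simp add: eval_nat_numeral\<close>)
    have "sum_list (map (\<lambda>zs. M ([] @ zs @ sr)) (concat (map (\<lambda>p. map (\<lambda>q. [fst q, snd q, snd p]) (\<Delta> (fst p))) (\<Delta> s0)))) =
          sum_list (map (\<lambda>zs. M ([] @ zs @ sr)) (concat (map (\<lambda>p. map (\<lambda>q. [fst p, fst q, snd q]) (\<Delta> (snd p))) (\<Delta> s0))))"
      by (rule transfer_teq[OF vsC vsW coassoc_teq h])
    then have G: "sum_list (map (\<lambda>p. sum_list (map (\<lambda>q. M (fst p # fst q # snd q # sr)) (\<Delta> (snd p)))) (\<Delta> s0)) =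
       sum_list (map (\<lambda>p. sum_list (map (\<lambda>q. M (fst q # snd q # snd p # sr)) (\<Delta> (fst p)))) (\<Delta> s0))"
      by (simp only: sum_list_concat_map map_map o_def append_Nil append_Cons)
    show ?thesis by (simp only: s0 G nth_Cons_0 nth_Cons_Suc take_Suc_Cons take_0 drop_Suc_Cons drop_0 One_nat_def
         append_Nil append_Cons)
  qed
  done

lemma teq_trans: "teq sW m X Y \<Longrightarrow> teq sW m Y Z \<Longrightarrow> teq sW m X Z"
  by (simp add: teq_def)

lemma itcop_split:
  fixes sW :: "'k \<Rightarrow> 'w::ab_group_add \<Rightarrow> 'w"
  assumes vsW: "vector_space sW"
  shows "i \<le> m \<Longrightarrow> teq sW (Suc (Suc m)) (split i (itcop \<Delta> m c)) (itcop \<Delta> (Suc m) c)"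
proof (induction m arbitrary: i)
  case 0 then have "i = 0" by simp
  then show ?case unfolding teq_def itcop_Suc by simp
next
  case (Suc m)
  note IH = Suc.IH
  note ile = Suc.prems
  let ?X = "itcop \<Delta> m c"
  have lX: "\<forall>s\<in>set ?X. length s = Suc m" using itcop_len by blast
  have e1: "itcop \<Delta> (Suc (Suc m)) c = split 0 (itcop \<Delta> (Suc m) c)" by (rule itcop_Suc)
  have e0: "itcop \<Delta> (Suc m) c = split 0 ?X" by (rule itcop_Suc)
  consider (z) "i = 0" | (o) "i = 1" | (t) j' where "i = Suc (Suc j')"
    apply (cases i)
     apply simp
    subgoal for k by (cases k) auto
    done
  then show ?case
  proof cases
    case z
    show ?thesis unfolding z e1 teq_def by simp
  next
    case o
    show ?thesis unfolding o e1 teq_def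
    proof (intro allI impI)
      fix M assume M: "multilinear sC sW (Suc (Suc (Suc m))) M"
      show "sum_list (map M (split 1 (itcop \<Delta> (Suc m) c))) = sum_list (map M (split 0 (itcop \<Delta> (Suc m) c)))"
        unfolding e0 by (rule split10[OF vsW lX M])
    qed
  next
    case t
    have j'm: "Suc j' < Suc m" using t ile by simp
    have t1: "teq sW (Suc (Suc (Suc m))) (split (Suc (Suc j')) (split 0 ?X)) (split 0 (split (Suc j') ?X))"
      unfolding teq_def by (intro allI impI) (rule split_comm[OF lX j'm])
    have ih: "teq sW (Suc (Suc m)) (split (Suc j') ?X) (itcop \<Delta> (Suc m) c)"
      using IH[of "Suc j'"] j'm by simp
    have t2: "teq sW (Suc (Suc (Suc m))) (split 0 (split (Suc j') ?X)) (split 0 (itcop \<Delta> (Suc m) c))"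
      by (rule split_cong[OF vsW _ ih]) simp
    have F: "teq sW (Suc (Suc (Suc m))) (split (Suc (Suc j')) (split 0 ?X)) (split 0 (itcop \<Delta> (Suc m) c))"
      by (rule teq_trans[OF t1 t2])
    show ?thesis using F by (simp only: t e1 e0[symmetric])
  qed
qed

end



lemma length_del: "a < length xs \<Longrightarrow> length (del a xs) = length xs - 1"
  by (simp add: del_def)

lemma nth_del: "a < length xs \<Longrightarrow> p < length xs - 1 \<Longrightarrow>
   del a xs ! p = (if p < a then xs ! p else xs ! Suc p)"
  by (auto simp: del_def nth_append min_def)

lemma del0: "del 0 xs = tl xs"
  by (simp add: del_def drop_Suc)

lemma del_upd_same: "del i (xs[i := u]) = del i xs"
  by (simp add: del_def take_update_cancel drop_update_cancel)

definition pos :: "nat \<Rightarrow> nat \<Rightarrow> nat" where "pos a i = (if i < a then i else i - 1)"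

lemma del_upd: "a \<noteq> i \<Longrightarrow> i < length xs \<Longrightarrow> a < length xs \<Longrightarrow>
   del a (xs[i := u]) = (del a xs)[pos a i := u]"
  by (rule nth_equalityI) (auto simp: length_del nth_del pos_def nth_list_update)

lemma pos_less: "a \<noteq> i \<Longrightarrow> i < length xs \<Longrightarrow> a < length xs \<Longrightarrow> pos a i < length (del a xs)"
  by (auto simp: pos_def length_del)

lemma nth_del_pos: "a \<noteq> i \<Longrightarrow> i < length xs \<Longrightarrow> a < length xs \<Longrightarrow> del a xs ! pos a i = xs ! i"
  by (auto simp: pos_def nth_del length_del)

lemma del_del_lt: "a < i \<Longrightarrow> i < length xs \<Longrightarrow> del (i - 1) (del a xs) = del a (del i xs)"
  by (rule nth_equalityI) (auto simp: length_del nth_del)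

lemma del_swap_adj: "Suc p < length ys \<Longrightarrow> del p (ys[p := ys ! Suc p, Suc p := ys ! p]) = del (Suc p) ys"
  by (rule nth_equalityI) (auto simp: length_del nth_del nth_list_update less_Suc_eq)


section \<open>Lie-Rinehart setting\<close>

locale LRP = COAL sC \<Delta>
  for sC :: "'k::field \<Rightarrow> 'c::ab_group_add \<Rightarrow> 'c" and \<Delta> :: "'c \<Rightarrow> ('c \<times> 'c) list" +
  fixes sL :: "'k \<Rightarrow> 'l::ab_group_add \<Rightarrow> 'l" and sB :: "'k \<Rightarrow> 'b::ab_group_add \<Rightarrow> 'b"
    and br :: "'l \<Rightarrow> 'l \<Rightarrow> 'l" and mB :: "'b \<Rightarrow> 'b \<Rightarrow> 'b"
    and \<mu> :: "'b \<Rightarrow> 'l \<Rightarrow> 'l" and \<psi> :: "'l \<Rightarrow> 'b \<Rightarrow> 'b"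
  assumes lr: "lie_rinehart sL sB br mB \<mu> \<psi>"
begin

lemma vsL: "vector_space sL" using lr by (simp add: lie_rinehart_def)
lemma vsB: "vector_space sB" using lr by (simp add: lie_rinehart_def)

lemma br_l1: "Vector_Spaces.linear sL sL (\<lambda>x. br x y)" using lr by (simp add: lie_rinehart_def bilinear_def)
lemma br_l2: "Vector_Spaces.linear sL sL (br x)" using lr by (simp add: lie_rinehart_def bilinear_def)
lemma mB_l1: "Vector_Spaces.linear sB sB (\<lambda>a. mB a b)" using lr by (simp add: lie_rinehart_def bilinear_def)
lemma mB_l2: "Vector_Spaces.linear sB sB (mB a)" using lr by (simp add: lie_rinehart_def bilinear_def)
lemma mu_l1: "Vector_Spaces.linear sB sL (\<lambda>a. \<mu> a x)" using lr by (simp add: lie_rinehart_def bilinear_def)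
lemma mu_l2: "Vector_Spaces.linear sL sL (\<mu> a)" using lr by (simp add: lie_rinehart_def bilinear_def)
lemma psi_l1: "Vector_Spaces.linear sL sB (\<lambda>x. \<psi> x b)" using lr by (simp add: lie_rinehart_def bilinear_def)
lemma psi_l2: "Vector_Spaces.linear sB sB (\<psi> x)" using lr by (simp add: lie_rinehart_def bilinear_def)
lemma br_alt: "br x x = 0" using lr by (simp add: lie_rinehart_def)
lemma psi_der: "\<psi> x (mB a b) = mB a (\<psi> x b) + mB (\<psi> x a) b" using lr by (simp add: lie_rinehart_def)
lemma psi_mu: "\<psi> (\<mu> a x) b = mB a (\<psi> x b)" using lr by (simp add: lie_rinehart_def)
lemma br_mu: "br x (\<mu> a y) = \<mu> (\<psi> x a) y + \<mu> a (br x y)" using lr by (simp add: lie_rinehart_def)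

lemma br_anti: "br x y = - br y x"
proof -
  have "0 = br (x + y) (x + y)" by (simp add: br_alt)
  also have "\<dots> = br x x + br x y + (br y x + br y y)"
    by (simp add: lin_add[OF br_l1] lin_add[OF br_l2])
  finally show ?thesis by (simp add: br_alt eq_neg_iff_add_eq_0)
qed

interpretation B: vector_space sB by (rule vsB)
interpretation L: vector_space sL by (rule vsL)

lemma sB_sign_Suc: "sB ((-1) ^ Suc p) v = - sB ((-1) ^ p) v"
  by simp

lemma sign_lemma:
  assumes sk: "skew n f"
  shows "length ys = n \<Longrightarrow> p < n \<Longrightarrow> f ys = sB ((-1) ^ p) (f (ys ! p # del p ys))"
proof (induction p arbitrary: ys)
  case 0
  then show ?case by (cases ys) (auto simp: del0)
next
  case (Suc p)
  define zs where "zs = ys[p := ys ! Suc p, Suc p := ys ! p]"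
  have lz: "length zs = n" using Suc.prems by (simp add: zs_def)
  have "f zs = - f ys" using sk Suc.prems unfolding skew_def zs_def
    by (metis Suc_lessD n_not_Suc_n)
  moreover have "f zs = sB ((-1) ^ p) (f (zs ! p # del p zs))"
    using Suc.IH[OF lz] Suc.prems by simp
  moreover have "zs ! p = ys ! Suc p" using Suc.prems by (simp add: zs_def nth_list_update)
  moreover have "del p zs = del (Suc p) ys" using Suc.prems by (simp add: zs_def del_swap_adj)
  ultimately show ?case by simp
qed


lemma T1_lin:
  assumes f: "multilinear sL sB n f" and l: "length xs = Suc n" and i: "i < Suc n" and a: "a < Suc n"
  shows "Vector_Spaces.linear sL sB (\<lambda>u. \<psi> ((xs[i := u]) ! a) (f (del a (xs[i := u]))))"
proof (cases "a = i")
  case True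
  have "(\<lambda>u. \<psi> ((xs[i := u]) ! a) (f (del a (xs[i := u])))) = (\<lambda>u. \<psi> u (f (del i xs)))"
    using True l i by (auto simp: del_upd_same)
  then show ?thesis using psi_l1 by simp
next
  case False
  have "(\<lambda>u. \<psi> ((xs[i := u]) ! a) (f (del a (xs[i := u])))) = (\<lambda>u. \<psi> (xs ! a) (f ((del a xs)[pos a i := u])))"
    using False l i a by (auto simp: del_upd)
  moreover have "Vector_Spaces.linear sL sB (\<lambda>u. f ((del a xs)[pos a i := u]))"
    by (rule ml_lin[OF f]) (use False l i a pos_less[of a i xs] length_del[of a xs] in auto)
  ultimately show ?thesis using lin_comp[OF _ psi_l2] by simp
qed

lemma T2_lin:
  assumes f: "multilinear sL sB n f" and l: "length xs = Suc n" and i: "i < Suc n" and jk: "j < k" "k < Suc n"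
  shows "Vector_Spaces.linear sL sB (\<lambda>u. f (br ((xs[i := u]) ! j) ((xs[i := u]) ! k) # del j (del k (xs[i := u]))))"
proof -
  obtain n' where n: "n = Suc n'" using jk by (cases n) auto
  have ld: "length (del j (del k xs)) = n'" using l jk n by (simp add: length_del)
  consider (J) "j = i" | (K) "k = i" | (N) "j \<noteq> i" "k \<noteq> i" by blast
  then show ?thesis
  proof cases
    case J
    have "(\<lambda>u. f (br ((xs[i := u]) ! j) ((xs[i := u]) ! k) # del j (del k (xs[i := u])))) =
       (\<lambda>u. f (br u (xs ! k) # del j (del k xs)))"
      using J l i jk by (auto simp: del_upd pos_def del_upd_same)
    moreover have "Vector_Spaces.linear sL sB (\<lambda>v. f (v # del j (del k xs)))"
      using ml_cons0[of sL sB n' f] f n ld by simp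
    ultimately show ?thesis using lin_comp[OF br_l1] by simp
  next
    case K
    have "(\<lambda>u. f (br ((xs[i := u]) ! j) ((xs[i := u]) ! k) # del j (del k (xs[i := u])))) =
       (\<lambda>u. f (br (xs ! j) u # del j (del k xs)))"
      using K l i jk by (auto simp: del_upd_same)
    moreover have "Vector_Spaces.linear sL sB (\<lambda>v. f (v # del j (del k xs)))"
      using ml_cons0[of sL sB n' f] f n ld by simp
    ultimately show ?thesis using lin_comp[OF br_l2] by simp
  next
    case N
    have jp: "j \<noteq> pos k i" using N jk by (auto simp: pos_def)
    have pk: "pos k i < length (del k xs)" using pos_less[of k i xs] N l i jk by simp
    have jl: "j < length (del k xs)" using l jk by (simp add: length_del)
    have "(\<lambda>u. f (br ((xs[i := u]) ! j) ((xs[i := u]) ! k) # del j (del k (xs[i := u])))) =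
       (\<lambda>u. f ((br (xs ! j) (xs ! k) # del j (del k xs))[Suc (pos j (pos k i)) := u]))"
      using N l i jk jp pk jl by (auto simp: del_upd)
    moreover have "Vector_Spaces.linear sL sB (\<lambda>u. f ((br (xs ! j) (xs ! k) # del j (del k xs))[Suc (pos j (pos k i)) := u]))"
      by (rule ml_lin[OF f]) (use ld n pos_less[OF jp pk jl] in auto)
    ultimately show ?thesis by simp
  qed
qed

lemma ce_ml:
  assumes f: "multilinear sL sB n f"
  shows "multilinear sL sB (Suc n) (ce_diff sB br \<psi> f)"
proof (rule mlI)
  fix xs :: "'l list" and i assume l: "length xs = Suc n" and i: "i < Suc n"
  have eq: "(\<lambda>u. ce_diff sB br \<psi> f (xs[i := u])) = (\<lambda>u.
     (\<Sum>a<Suc n. sB ((-1) ^ a) (\<psi> ((xs[i := u]) ! a) (f (del a (xs[i := u]))))) +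
     (\<Sum>k<Suc n. \<Sum>j<k. sB ((-1) ^ (j + k)) (f (br ((xs[i := u]) ! j) ((xs[i := u]) ! k) # del j (del k (xs[i := u]))))))"
    using l by (simp add: ce_diff_def)
  show "Vector_Spaces.linear sL sB (\<lambda>u. ce_diff sB br \<psi> f (xs[i := u]))"
    unfolding eq
    apply (rule lin_addf)
     apply (rule lin_sum_fun[OF vsL vsB])
     apply (rule lin_scalef)
     apply (rule T1_lin[OF f l i]; simp)
    apply (rule lin_sum_fun[OF vsL vsB])
    apply (rule lin_sum_fun[OF vsL vsB])
    apply (rule lin_scalef)
    apply (rule T2_lin[OF f l i]; simp)
    done
qed


lemma mB_sB: "mB c (sB s v) = sB s (mB c v)" using lin_scale[OF mB_l2] .

lemma f_B_slot:
  assumes sk: "skew n f" and fB0: "\<And>b v R. Suc (length R) = n \<Longrightarrow> f (\<mu> b v # R) = mB b (f (v # R))"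
    and l: "length ys = n" and j: "j < n"
  shows "f (ys[j := \<mu> b (ys ! j)]) = mB b (f ys)"
proof -
  have "f (ys[j := \<mu> b (ys ! j)]) = sB ((-1) ^ j) (f (\<mu> b (ys ! j) # del j ys))"
    using sign_lemma[OF sk, of "ys[j := \<mu> b (ys ! j)]" j] l j by (simp add: del_upd_same)
  also have "f (\<mu> b (ys ! j) # del j ys) = mB b (f (ys ! j # del j ys))"
    by (rule fB0) (use l j in \<open>simp add: length_del\<close>)
  also have "sB ((-1) ^ j) (mB b (f (ys ! j # del j ys))) = mB b (sB ((-1) ^ j) (f (ys ! j # del j ys)))"
    by (simp add: mB_sB)
  also have "sB ((-1) ^ j) (f (ys ! j # del j ys)) = f ys"
    using sign_lemma[OF sk l j] by simp
  finally show ?thesis .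
qed

lemma f_cons_B:
  assumes fB: "\<And>ys j b. length ys = n \<Longrightarrow> j < n \<Longrightarrow> f (ys[j := \<mu> b (ys ! j)]) = mB b (f ys)"
    and l: "Suc (length R) = n"
  shows "f (\<mu> c v # R) = mB c (f (v # R))"
  using fB[of "v # R" 0 c] l by simp


lemma ce_B:
  assumes f: "multilinear sL sB n f" and sk: "skew n f"
    and fB: "\<And>ys j b. length ys = n \<Longrightarrow> j < n \<Longrightarrow> f (ys[j := \<mu> b (ys ! j)]) = mB b (f ys)"
    and l: "length xs = Suc n" and i: "i < Suc n"
  shows "ce_diff sB br \<psi> f (xs[i := \<mu> b (xs ! i)]) = mB b (ce_diff sB br \<psi> f xs)"
proof -
  define x where "x = xs ! i"
  define xs' where "xs' = xs[i := \<mu> b x]"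
  define P where "P a = \<psi> (xs ! a) b" for a
  define T1 where "T1 a = sB ((-1) ^ a) (\<psi> (xs ! a) (f (del a xs)))" for a
  define T2 where "T2 j k = sB ((-1) ^ (j + k)) (f (br (xs ! j) (xs ! k) # del j (del k xs)))" for j k
  define e1 where "e1 a = (if a = i then 0 else sB ((-1) ^ a) (mB (P a) (f (del a xs))))" for a
  define X where "X k = - sB ((-1) ^ (i + k)) (mB (P k) (f (x # del i (del k xs))))" for k
  define Y where "Y j = sB ((-1) ^ (j + i)) (mB (P j) (f (x # del j (del i xs))))" for j
  define e2 where "e2 j k = (if j = i then X k else 0) + (if k = i then Y j else 0)" for j k
  have lxs': "length xs' = Suc n" using l by (simp add: xs'_def)
  have fcons: "f (\<mu> c v # R) = mB c (f (v # R))" if "Suc (length R) = n" for c v R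
    by (rule f_cons_B[OF fB that])
  have flin0: "Vector_Spaces.linear sL sB (\<lambda>v. f (v # R))" if "Suc (length R) = n" for R
    using ml_cons0[of sL sB "length R" f R] f that by simp
  have s1: "sB ((-1) ^ a) (\<psi> (xs' ! a) (f (del a xs'))) = mB b (T1 a) + e1 a" if a: "a < Suc n" for a
  proof (cases "a = i")
    case True
    then show ?thesis using l i
      by (simp add: xs'_def T1_def e1_def del_upd_same psi_mu mB_sB x_def)
  next
    case False
    have d: "del a xs' = (del a xs)[pos a i := \<mu> b ((del a xs) ! pos a i)]"
      using False l i a by (simp add: xs'_def del_upd nth_del_pos x_def)
    have "f (del a xs') = mB b (f (del a xs))"
      unfolding d by (rule fB) (use False l i a pos_less[of a i xs] length_del[of a xs] in auto)
    then show ?thesis using False l i a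
      by (simp add: xs'_def T1_def e1_def psi_der mB_sB P_def B.scale_right_distrib)
  qed
  have s2: "sB ((-1) ^ (j + k)) (f (br (xs' ! j) (xs' ! k) # del j (del k xs'))) = mB b (T2 j k) + e2 j k"
    if jk: "j < k" "k < Suc n" for j k
  proof -
    obtain n' where n: "n = Suc n'" using jk by (cases n) auto
    have ld: "Suc (length (del j (del k xs))) = n" using l jk n by (simp add: length_del)
    consider (J) "j = i" | (K) "k = i" | (N) "j \<noteq> i" "k \<noteq> i" by blast
    then show ?thesis
    proof cases
      case J
      have d: "del j (del k xs') = del j (del k xs)"
        using J l i jk by (simp add: xs'_def del_upd pos_def del_upd_same)
      have xk: "xs' ! k = xs ! k" "xs' ! j = \<mu> b x" using J jk l by (auto simp: xs'_def)
      have "br (\<mu> b x) (xs ! k) = - \<mu> (P k) x + \<mu> b (br x (xs ! k))"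
        using br_anti[of "\<mu> b x" "xs ! k"] br_mu[of "xs ! k" b x] br_anti[of "xs ! k" x]
        by (simp add: P_def lin_neg[OF mu_l2])
      then have "f (br (xs' ! j) (xs' ! k) # del j (del k xs')) =
          - mB (P k) (f (x # del j (del k xs))) + mB b (f (br x (xs ! k) # del j (del k xs)))"
        using ld by (simp add: xk d lin_add[OF flin0] lin_neg[OF flin0] lin_diff[OF flin0] fcons)
      then show ?thesis using J jk
        by (simp add: T2_def e2_def X_def x_def mB_sB B.scale_right_distrib B.scale_right_diff_distrib)
    next
      case K
      have d: "del j (del k xs') = del j (del k xs)"
        using K by (simp add: xs'_def del_upd_same)
      have xk: "xs' ! k = \<mu> b x" "xs' ! j = xs ! j" using K jk l by (auto simp: xs'_def)
      have "f (br (xs' ! j) (xs' ! k) # del j (del k xs')) =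
          mB (P j) (f (x # del j (del k xs))) + mB b (f (br (xs ! j) x # del j (del k xs)))"
        using ld by (simp add: xk d br_mu lin_add[OF flin0] fcons P_def)
      then show ?thesis using K jk
        by (simp add: T2_def e2_def Y_def x_def mB_sB B.scale_right_distrib)
    next
      case N
      have jp: "j \<noteq> pos k i" using N jk by (auto simp: pos_def)
      have pk: "pos k i < length (del k xs)" using pos_less[of k i xs] N l i jk by simp
      have jl: "j < length (del k xs)" using l jk by (simp add: length_del)
      have d: "del j (del k xs') = (del j (del k xs))[pos j (pos k i) := \<mu> b x]"
        using N l i jk jp pk jl by (simp add: xs'_def del_upd)
      have nx: "del j (del k xs) ! pos j (pos k i) = x"
        using nth_del_pos[OF jp pk jl] nth_del_pos[of k i xs] N l i jk by (simp add: x_def)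
      have xk: "xs' ! k = xs ! k" "xs' ! j = xs ! j" using N jk l by (auto simp: xs'_def)
      have "f (br (xs' ! j) (xs' ! k) # del j (del k xs')) =
          f ((br (xs ! j) (xs ! k) # del j (del k xs))[Suc (pos j (pos k i)) :=
              \<mu> b ((br (xs ! j) (xs ! k) # del j (del k xs)) ! Suc (pos j (pos k i)))])"
        by (simp add: xk d nx)
      also have "\<dots> = mB b (f (br (xs ! j) (xs ! k) # del j (del k xs)))"
        by (rule fB) (use ld pos_less[OF jp pk jl] in auto)
      finally show ?thesis using N
        by (simp add: T2_def e2_def mB_sB)
    qed
  qed
  have s3: "(\<Sum>a<Suc n. e1 a) + (\<Sum>k<Suc n. \<Sum>j<k. e2 j k) = 0"
  proof -
    have e2s: "(\<Sum>j<k. e2 j k) = (if i < k then X k else 0) + (if k = i then (\<Sum>j<i. Y j) else 0)" for k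
      by (cases "k = i") (simp_all add: e2_def sum.distrib)
    have E2: "(\<Sum>k<Suc n. \<Sum>j<k. e2 j k) = (\<Sum>k<Suc n. if i < k then X k else 0) + (\<Sum>j<i. Y j)"
      using i by (simp add: e2s sum.distrib)
    have e1s: "e1 a = (if i < a then e1 a else 0) + (if a < i then e1 a else 0)" for a
      by (cases "i < a"; cases "a < i") (auto simp: e1_def)
    have fil: "{a \<in> {..<Suc n}. a < i} = {..<i}" using i by auto
    have E1: "(\<Sum>a<Suc n. e1 a) = (\<Sum>a<Suc n. if i < a then e1 a else 0) + (\<Sum>a<i. e1 a)"
    proof -
      have "(\<Sum>a<Suc n. e1 a) = (\<Sum>a<Suc n. if i < a then e1 a else 0) + (\<Sum>a<Suc n. if a < i then e1 a else 0)"
        by (subst sum.distrib[symmetric]) (rule sum.cong, simp, rule e1s)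
      also have "(\<Sum>a<Suc n. if a < i then e1 a else 0) = (\<Sum>a<i. e1 a)"
        using sum.inter_filter[of "{..<Suc n}" e1 "\<lambda>a. a < i"] fil by simp
      finally show ?thesis .
    qed
    have p1: "e1 a + X a = 0" if a: "i < a" "a < Suc n" for a
    proof -
      have la: "length (del a xs) = n" using a l by (simp add: length_del)
      have "f (del a xs) = sB ((-1) ^ i) (f (del a xs ! i # del i (del a xs)))"
        by (rule sign_lemma[OF sk la]) (use a in simp)
      moreover have "del a xs ! i = x" using a l by (simp add: nth_del x_def)
      ultimately have "e1 a = sB ((-1) ^ a * (-1) ^ i) (mB (P a) (f (x # del i (del a xs))))"
        using a by (simp add: e1_def mB_sB)
      then show ?thesis by (simp add: X_def power_add mult.commute)
    qed
    have p2: "e1 a + Y a = 0" if a: "a < i" for a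
    proof -
      obtain i' where i': "i = Suc i'" using a by (cases i) auto
      have la: "length (del a xs) = n" using a i l by (simp add: length_del)
      have "f (del a xs) = sB ((-1) ^ i') (f (del a xs ! i' # del i' (del a xs)))"
        by (rule sign_lemma[OF sk la]) (use a i i' in simp)
      moreover have "del a xs ! i' = x" using a i l i' by (simp add: nth_del x_def)
      moreover have "del i' (del a xs) = del a (del i xs)" using del_del_lt[of a i xs] a i l i' by simp
      ultimately have "e1 a = sB ((-1) ^ a * (-1) ^ i') (mB (P a) (f (x # del a (del i xs))))"
        using a by (simp add: e1_def mB_sB)
      then show ?thesis by (simp add: Y_def power_add mult.commute i')
    qed
    have "(\<Sum>a<Suc n. e1 a) + (\<Sum>k<Suc n. \<Sum>j<k. e2 j k) =
       (\<Sum>a<Suc n. if i < a then e1 a + X a else 0) + (\<Sum>a<i. e1 a + Y a)"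
    proof -
      have c1: "(\<Sum>a<Suc n. if i < a then e1 a + X a else 0) =
          (\<Sum>a<Suc n. if i < a then e1 a else 0) + (\<Sum>a<Suc n. if i < a then X a else 0)"
        by (subst sum.distrib[symmetric]) (rule sum.cong; simp)
      have c2: "(\<Sum>a<i. e1 a + Y a) = (\<Sum>a<i. e1 a) + (\<Sum>a<i. Y a)" by (rule sum.distrib)
      show ?thesis unfolding E1 E2 c1 c2 by (simp add: add_ac)
    qed
    also have "\<dots> = 0"
    proof -
      have "(\<Sum>a<Suc n. if i < a then e1 a + X a else 0) = 0" by (rule sum.neutral) (use p1 in auto)
      moreover have "(\<Sum>a<i. e1 a + Y a) = 0" by (rule sum.neutral) (use p2 in auto)
      ultimately show ?thesis by simp
    qed
    finally show ?thesis .
  qed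
  have "ce_diff sB br \<psi> f xs' =
     (\<Sum>a<Suc n. sB ((-1) ^ a) (\<psi> (xs' ! a) (f (del a xs')))) +
     (\<Sum>k<Suc n. \<Sum>j<k. sB ((-1) ^ (j + k)) (f (br (xs' ! j) (xs' ! k) # del j (del k xs'))))"
    using lxs' by (simp add: ce_diff_def)
  also have "\<dots> = (\<Sum>a<Suc n. mB b (T1 a) + e1 a) + (\<Sum>k<Suc n. \<Sum>j<k. mB b (T2 j k) + e2 j k)"
    using s1 s2 by simp
  also have "\<dots> = mB b ((\<Sum>a<Suc n. T1 a) + (\<Sum>k<Suc n. \<Sum>j<k. T2 j k)) +
      ((\<Sum>a<Suc n. e1 a) + (\<Sum>k<Suc n. \<Sum>j<k. e2 j k))"
    by (simp add: sum.distrib lin_add[OF mB_l2] lin_sum[OF mB_l2])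
  also have "\<dots> = mB b (ce_diff sB br \<psi> f xs)"
    using s3 l by (simp add: ce_diff_def T1_def T2_def)
  finally show ?thesis by (simp add: xs'_def x_def)
qed


section \<open>Induced maps\<close>

lemma map2_upd_fun: "length gs = length s \<Longrightarrow> i < length s \<Longrightarrow>
   map2 (\<lambda>g x. g x) (gs[i := g]) s = (map2 (\<lambda>g x. g x) gs s)[i := g (s ! i)]"
  by (rule nth_equalityI) (auto simp: nth_list_update)

lemma map2_upd_arg: "length gs = length s \<Longrightarrow> i < length s \<Longrightarrow>
   map2 (\<lambda>g x. g x) gs (s[i := v]) = (map2 (\<lambda>g x. g x) gs s)[i := (gs ! i) v]"
  by (rule nth_equalityI) (auto simp: nth_list_update)

lemma Lmap_ml:
  assumes D: "multilinear sL sB m D" and gs: "\<forall>g\<in>set gs. Vector_Spaces.linear sC sL g" and lg: "length gs = m"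
  shows "multilinear sC sB m (\<lambda>s. D (map2 (\<lambda>g x. g x) gs s))"
proof (rule mlI)
  fix xs :: "'c list" and j assume l: "length xs = m" and j: "j < m"
  have "(\<lambda>x. D (map2 (\<lambda>g x. g x) gs (xs[j := x]))) = (\<lambda>x. D ((map2 (\<lambda>g x. g x) gs xs)[j := (gs ! j) x]))"
    using l lg j by (simp add: map2_upd_arg)
  moreover have "Vector_Spaces.linear sC sB (\<lambda>x. D ((map2 (\<lambda>g x. g x) gs xs)[j := (gs ! j) x]))"
    by (rule lin_comp[OF _ ml_lin[OF D]]) (use gs lg l j in auto)
  ultimately show "Vector_Spaces.linear sC sB (\<lambda>x. D (map2 (\<lambda>g x. g x) gs (xs[j := x])))" by simp
qed

lemma Rmap_ml:
  assumes D: "multilinear sL sB (Suc n) D" and \<beta>: "Vector_Spaces.linear sC sB \<beta>"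
    and gs: "\<forall>g\<in>set gs. Vector_Spaces.linear sC sL g" and lg: "length gs = Suc n" and i: "i < Suc n"
  shows "multilinear sC sB (Suc (Suc n)) (\<lambda>t. mB (\<beta> (t ! i)) (D (map2 (\<lambda>g x. g x) gs (del i t))))"
proof (rule mlI)
  fix ts :: "'c list" and j assume l: "length ts = Suc (Suc n)" and j: "j < Suc (Suc n)"
  show "Vector_Spaces.linear sC sB (\<lambda>x. mB (\<beta> ((ts[j := x]) ! i)) (D (map2 (\<lambda>g x. g x) gs (del i (ts[j := x])))))"
  proof (cases "j = i")
    case True
    have "(\<lambda>x. mB (\<beta> ((ts[j := x]) ! i)) (D (map2 (\<lambda>g x. g x) gs (del i (ts[j := x]))))) =
        (\<lambda>x. mB (\<beta> x) (D (map2 (\<lambda>g x. g x) gs (del i ts))))"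
      using True l i by (simp add: del_upd_same)
    then show ?thesis using lin_comp[OF \<beta> mB_l1] by simp
  next
    case False
    have ld: "length (del i ts) = Suc n" using l i by (simp add: length_del)
    have pj: "pos i j < Suc n" using pos_less[of i j ts] False l i j by (simp add: length_del)
    have "(\<lambda>x. mB (\<beta> ((ts[j := x]) ! i)) (D (map2 (\<lambda>g x. g x) gs (del i (ts[j := x]))))) =
        (\<lambda>x. mB (\<beta> (ts ! i)) (D ((map2 (\<lambda>g x. g x) gs (del i ts))[pos i j := (gs ! pos i j) x])))"
      using False l i j ld lg pj by (simp add: del_upd map2_upd_arg)
    moreover have "Vector_Spaces.linear sC sB (\<lambda>x. D ((map2 (\<lambda>g x. g x) gs (del i ts))[pos i j := (gs ! pos i j) x]))"
      by (rule lin_comp[OF _ ml_lin[OF D]]) (use gs lg ld pj in auto)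
    ultimately show ?thesis using lin_comp[OF _ mB_l2] by simp
  qed
qed

lemma mu_bar_lin:
  assumes \<beta>: "Vector_Spaces.linear sC sB \<beta>" and g: "Vector_Spaces.linear sC sL g"
  shows "Vector_Spaces.linear sC sL (mu_bar \<Delta> \<mu> \<beta> g)"
proof -
  have h: "multilinear sC sL 2 (\<lambda>zs. \<mu> (\<beta> (zs ! 0)) (g (zs ! 1)))"
  proof (rule mlI)
    fix xs :: "'c list" and j :: nat assume l: "length xs = 2" and j: "j < 2"
    show "Vector_Spaces.linear sC sL (\<lambda>x. \<mu> (\<beta> (xs[j := x] ! 0)) (g (xs[j := x] ! 1)))"
    proof (cases "j = 0")
      case True then show ?thesis using l lin_comp[OF \<beta> mu_l1] by simp
    next
      case False then have "j = 1" using j by simp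
      then show ?thesis using l lin_comp[OF g mu_l2] by simp
    qed
  qed
  show ?thesis using Dlin[OF vsL h] by (simp add: mu_bar_def[abs_def])
qed


lemma main_nondeg:
  assumes f: "multilinear sL sB n f" and sk: "skew n f"
    and fB: "\<And>ys j b. length ys = n \<Longrightarrow> j < n \<Longrightarrow> f (ys[j := \<mu> b (ys ! j)]) = mB b (f ys)"
    and i: "i < Suc n" and lg: "length gs = Suc n" and \<beta>: "Vector_Spaces.linear sC sB \<beta>"
    and gs: "\<forall>g\<in>set gs. Vector_Spaces.linear sC sL g"
  shows "induced \<Delta> (ce_diff sB br \<psi> f) (gs[i := mu_bar \<Delta> \<mu> \<beta> (gs ! i)]) c =
    sum_list (map (\<lambda>t. mB (\<beta> (t ! i)) (ce_diff sB br \<psi> f (map2 (\<lambda>g x. g x) gs (del i t)))) (itcop \<Delta> (Suc n) c))"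
proof -
  let ?D = "ce_diff sB br \<psi> f"
  let ?MR = "\<lambda>t. mB (\<beta> (t ! i)) (?D (map2 (\<lambda>g x. g x) gs (del i t)))"
  have Dml: "multilinear sL sB (Suc n) ?D" by (rule ce_ml[OF f])
  have per: "?D (map2 (\<lambda>g x. g x) (gs[i := mu_bar \<Delta> \<mu> \<beta> (gs ! i)]) s) =
     sum_list (map (\<lambda>p. ?MR (take i s @ fst p # snd p # drop (Suc i) s)) (\<Delta> (s ! i)))"
    if s: "s \<in> set (itcop \<Delta> n c)" for s
  proof -
    have ls: "length s = Suc n" using itcop_len[OF s] .
    let ?xs = "map2 (\<lambda>g x. g x) gs s"
    have lxs: "length ?xs = Suc n" using ls lg by simp
    have "?D (map2 (\<lambda>g x. g x) (gs[i := mu_bar \<Delta> \<mu> \<beta> (gs ! i)]) s) =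
        ?D (?xs[i := sum_list (map (\<lambda>p. \<mu> (\<beta> (fst p)) ((gs ! i) (snd p))) (\<Delta> (s ! i)))])"
      using ls lg i by (simp add: map2_upd_fun mu_bar_def)
    also have "\<dots> = sum_list (map (\<lambda>p. ?D (?xs[i := \<mu> (\<beta> (fst p)) ((gs ! i) (snd p))])) (\<Delta> (s ! i)))"
      by (rule lin_sum_list[OF ml_lin[OF Dml lxs i]])
    also have "\<dots> = sum_list (map (\<lambda>p. ?MR (take i s @ fst p # snd p # drop (Suc i) s)) (\<Delta> (s ! i)))"
    proof (rule arg_cong[where f=sum_list], rule map_cong[OF refl])
      fix p :: "'c \<times> 'c"
      let ?ys = "?xs[i := (gs ! i) (snd p)]"
      have "?D (?xs[i := \<mu> (\<beta> (fst p)) ((gs ! i) (snd p))]) = ?D (?ys[i := \<mu> (\<beta> (fst p)) (?ys ! i)])"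
        using lxs i by simp
      also have "\<dots> = mB (\<beta> (fst p)) (?D ?ys)"
        by (rule ce_B[OF f sk fB]) (use lxs i in simp_all)
      also have "?ys = map2 (\<lambda>g x. g x) gs (s[i := snd p])"
        using ls lg i by (simp add: map2_upd_arg)
      also have "s[i := snd p] = del i (take i s @ fst p # snd p # drop (Suc i) s)"
        using ls i by (auto simp: del_def upd_conv_take_nth_drop)
      finally show "?D (?xs[i := \<mu> (\<beta> (fst p)) ((gs ! i) (snd p))]) = ?MR (take i s @ fst p # snd p # drop (Suc i) s)"
        using ls i by (simp add: nth_append)
    qed
    finally show ?thesis .
  qed
  have "induced \<Delta> ?D (gs[i := mu_bar \<Delta> \<mu> \<beta> (gs ! i)]) c =
      sum_list (map (\<lambda>s. ?D (map2 (\<lambda>g x. g x) (gs[i := mu_bar \<Delta> \<mu> \<beta> (gs ! i)]) s)) (itcop \<Delta> n c))"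
    using lg by (simp add: induced_def)
  also have "\<dots> = sum_list (map (\<lambda>s. sum_list (map (\<lambda>p. ?MR (take i s @ fst p # snd p # drop (Suc i) s)) (\<Delta> (s ! i)))) (itcop \<Delta> n c))"
    by (rule arg_cong[where f=sum_list], rule map_cong[OF refl]) (rule per)
  also have "\<dots> = sum_list (map ?MR (split i (itcop \<Delta> n c)))"
    by (rule sum_split[symmetric])
  also have "\<dots> = sum_list (map ?MR (itcop \<Delta> (Suc n) c))"
    using itcop_split[OF vsB, of i n c] i Rmap_ml[OF Dml \<beta> gs lg i] by (simp add: teq_def)
  finally show ?thesis .
qed


definition degen :: "nat \<Rightarrow> bool" where
  "degen n \<longleftrightarrow> (\<forall>c \<phi>s. length \<phi>s = Suc n \<and> (\<forall>\<phi>\<in>set \<phi>s. Vector_Spaces.linear sC ((*) :: 'k \<Rightarrow> 'k \<Rightarrow> 'k) \<phi>) \<longrightarrow>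
       sum_list (map (prodf \<phi>s) (itcop \<Delta> n c)) = 0)"

lemma lemP1:
  fixes sW :: "'k \<Rightarrow> 'w::ab_group_add \<Rightarrow> 'w"
  assumes vsW: "vector_space sW" and T: "\<forall>t\<in>set T. length t = m"
    and z: "\<forall>\<phi>s. length \<phi>s = m \<and> (\<forall>\<phi>\<in>set \<phi>s. Vector_Spaces.linear sC ((*) :: 'k \<Rightarrow> 'k \<Rightarrow> 'k) \<phi>) \<longrightarrow>
       sum_list (map (prodf \<phi>s) T) = 0"
    and M: "multilinear sC sW m M"
  shows "sum_list (map M T) = 0"
proof -
  have "sum_list (map (\<lambda>x. sW (fst x) (M (snd x))) (map (\<lambda>t. (1, t)) T)) = 0"
    by (rule lemP[OF vsC vsW _ _ M]) (use T z in \<open>auto simp: o_def\<close>)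
  then show ?thesis by (simp add: o_def vector_space.vector_space_assms(4)[OF vsW])
qed

lemma degen_Suc:
  assumes d: "degen n"
  shows "length \<phi>s = Suc (Suc n) \<Longrightarrow> (\<forall>\<phi>\<in>set \<phi>s. Vector_Spaces.linear sC ((*) :: 'k \<Rightarrow> 'k \<Rightarrow> 'k) \<phi>) \<Longrightarrow>
       sum_list (map (prodf \<phi>s) (itcop \<Delta> (Suc n) c)) = 0"
proof -
  assume l: "length \<phi>s = Suc (Suc n)" and lin: "\<forall>\<phi>\<in>set \<phi>s. Vector_Spaces.linear sC ((*) :: 'k \<Rightarrow> 'k \<Rightarrow> 'k) \<phi>"
  have pm: "multilinear sC (*) (Suc (Suc n)) (prodf \<phi>s)" using prodf_ml[OF vsC lin] l by simp
  have "sum_list (map (prodf \<phi>s) (itcop \<Delta> (Suc n) c)) =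
     sum_list (map (\<lambda>s. sum_list (map (\<lambda>p. prodf \<phi>s (take 0 s @ fst p # snd p # drop (Suc 0) s)) (\<Delta> (s ! 0)))) (itcop \<Delta> n c))"
    unfolding itcop_Suc sum_split ..
  also have "\<dots> = 0"
    by (rule lemP1[OF K_vs _ _ split_ml[OF K_vs pm]]) (use itcop_len d in \<open>auto simp: degen_def\<close>)
  finally show ?thesis .
qed

lemma main_deg:
  assumes d: "degen n" and f: "multilinear sL sB n f"
    and i: "i < Suc n" and lg: "length gs = Suc n" and \<beta>: "Vector_Spaces.linear sC sB \<beta>"
    and gs: "\<forall>g\<in>set gs. Vector_Spaces.linear sC sL g"
  shows "induced \<Delta> (ce_diff sB br \<psi> f) (gs[i := mu_bar \<Delta> \<mu> \<beta> (gs ! i)]) c =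
    sum_list (map (\<lambda>t. mB (\<beta> (t ! i)) (ce_diff sB br \<psi> f (map2 (\<lambda>g x. g x) gs (del i t)))) (itcop \<Delta> (Suc n) c))"
proof -
  let ?D = "ce_diff sB br \<psi> f"
  have Dml: "multilinear sL sB (Suc n) ?D" by (rule ce_ml[OF f])
  let ?gs = "gs[i := mu_bar \<Delta> \<mu> \<beta> (gs ! i)]"
  have gs': "\<forall>g\<in>set ?gs. Vector_Spaces.linear sC sL g"
  proof
    fix g assume "g \<in> set ?gs"
    then have "g \<in> insert (mu_bar \<Delta> \<mu> \<beta> (gs ! i)) (set gs)" using set_update_subset_insert by fast
    moreover have "Vector_Spaces.linear sC sL (mu_bar \<Delta> \<mu> \<beta> (gs ! i))"
      by (rule mu_bar_lin[OF \<beta>]) (use gs lg i in simp)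
    ultimately show "Vector_Spaces.linear sC sL g" using gs by auto
  qed
  have "induced \<Delta> ?D ?gs c = sum_list (map (\<lambda>s. ?D (map2 (\<lambda>g x. g x) ?gs s)) (itcop \<Delta> n c))"
    using lg by (simp add: induced_def)
  also have "\<dots> = 0"
    by (rule lemP1[OF vsB _ _ Lmap_ml[OF Dml gs']]) (use itcop_len d lg in \<open>auto simp: degen_def\<close>)
  also have "0 = sum_list (map (\<lambda>t. mB (\<beta> (t ! i)) (?D (map2 (\<lambda>g x. g x) gs (del i t)))) (itcop \<Delta> (Suc n) c))"
    by (rule lemP1[OF vsB _ _ Rmap_ml[OF Dml \<beta> gs lg i], symmetric]) (use itcop_len degen_Suc[OF d] in auto)
  finally show ?thesis .
qed


lemma lin_fscale:
  assumes \<phi>: "Vector_Spaces.linear sC ((*) :: 'k \<Rightarrow> 'k \<Rightarrow> 'k) \<phi>" and vs: "vector_space s2"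
  shows "Vector_Spaces.linear sC s2 (\<lambda>x. s2 (\<phi> x) w)"
  by (rule linI[OF vsC vs]) (auto simp: lin_add[OF \<phi>] lin_scale[OF \<phi>]
       vector_space.vector_space_assms(2)[OF vs] vector_space.vector_space_assms(3)[OF vs, symmetric])

lemma map2_scaled: "length \<phi>r = length R \<Longrightarrow> length tr = length R \<Longrightarrow>
  map2 (\<lambda>g x. g x) (map2 (\<lambda>\<phi> y x. sL (\<phi> x) y) \<phi>r R) tr = map2 sL (map2 (\<lambda>\<phi> x. \<phi> x) \<phi>r tr) R"
  by (rule nth_equalityI) auto

lemma dich:
  assumes f: "multilinear sL sB (Suc n') f" and hl: "hom_linear sC sL sB \<Delta> mB \<mu> (Suc n') f"
    and nd: "\<not> degen (Suc n')" and lR: "length R = n'"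
  shows "f (\<mu> b v # R) = mB b (f (v # R))"
proof -
  obtain c \<phi>s where l: "length \<phi>s = Suc (Suc n')"
    and lin: "\<forall>\<phi>\<in>set \<phi>s. Vector_Spaces.linear sC ((*) :: 'k \<Rightarrow> 'k \<Rightarrow> 'k) \<phi>"
    and S: "sum_list (map (prodf \<phi>s) (itcop \<Delta> (Suc n') c)) \<noteq> 0"
    using nd unfolding degen_def by blast
  obtain \<phi>0 \<phi>1 \<phi>r where \<phi>s: "\<phi>s = \<phi>0 # \<phi>1 # \<phi>r"
    using l by (cases \<phi>s; cases "tl \<phi>s") auto
  have l\<phi>r: "length \<phi>r = n'" using l \<phi>s by simp
  define S where "S = sum_list (map (prodf \<phi>s) (itcop \<Delta> (Suc n') c))"
  define \<beta> where "\<beta> x = sB (\<phi>0 x) b" for x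
  define g0 where "g0 x = sL (\<phi>1 x) v" for x
  define gs where "gs = g0 # map2 (\<lambda>\<phi> y x. sL (\<phi> x) y) \<phi>r R"
  define V where "V = f (\<mu> b v # R)"
  define W where "W = mB b (f (v # R))"
  have lgs: "length gs = Suc n'" using l\<phi>r lR by (simp add: gs_def)
  have \<beta>lin: "Vector_Spaces.linear sC sB \<beta>" unfolding \<beta>_def by (rule lin_fscale[OF _ vsB]) (use lin \<phi>s in simp)
  have gslin: "\<forall>g\<in>set gs. Vector_Spaces.linear sC sL g"
  proof
    fix g assume "g \<in> set gs"
    then have "g = g0 \<or> g \<in> set (map2 (\<lambda>\<phi> y x. sL (\<phi> x) y) \<phi>r R)" by (simp add: gs_def)
    then show "Vector_Spaces.linear sC sL g"
    proof
      assume "g = g0"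
      have "Vector_Spaces.linear sC sL (\<lambda>x. sL (\<phi>1 x) v)" by (rule lin_fscale[OF _ vsL]) (use lin \<phi>s in simp)
      then show ?thesis using \<open>g = g0\<close> by (simp add: g0_def[abs_def])
    next
      assume "g \<in> set (map2 (\<lambda>\<phi> y x. sL (\<phi> x) y) \<phi>r R)"
      then obtain k where k: "k < length \<phi>r" "k < length R" "g = (\<lambda>x. sL ((\<phi>r ! k) x) (R ! k))"
        by (auto simp: in_set_conv_nth)
      have "\<phi>r ! k \<in> set \<phi>s" using k \<phi>s by simp
      then have "Vector_Spaces.linear sC sL (\<lambda>x. sL ((\<phi>r ! k) x) (R ! k))" using lin by (intro lin_fscale[OF _ vsL]) simp
      then show ?thesis using k by simp
    qed
  qed
  have H: "induced \<Delta> f (gs[0 := mu_bar \<Delta> \<mu> \<beta> (gs ! 0)]) c =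
      sum_list (map (\<lambda>t. mB (\<beta> (t ! 0)) (f (map2 (\<lambda>g x. g x) gs (del 0 t)))) (itcop \<Delta> (Suc n') c))"
    using hl lgs \<beta>lin gslin unfolding hom_linear_def by blast
  have rhs: "mB (\<beta> (t ! 0)) (f (map2 (\<lambda>g x. g x) gs (del 0 t))) = sB (prodf \<phi>s t) W"
    if t: "t \<in> set (itcop \<Delta> (Suc n') c)" for t
  proof -
    have lt: "length t = Suc (Suc n')" using itcop_len[OF t] .
    then obtain t0 t1 tr where tt: "t = t0 # t1 # tr" by (cases t; cases "tl t") auto
    have ltr: "length tr = n'" using lt tt by simp
    have "map2 (\<lambda>g x. g x) gs (del 0 t) = map2 sL (\<phi>1 t1 # map2 (\<lambda>\<phi> x. \<phi> x) \<phi>r tr) (v # R)"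
      using tt l\<phi>r lR ltr by (simp add: gs_def del0 g0_def map2_scaled)
    then have "f (map2 (\<lambda>g x. g x) gs (del 0 t)) = sB (prodf (\<phi>1 # \<phi>r) (t1 # tr)) (f (v # R))"
      using ml_scaled_list[OF vsB, where ys="v # R" and f=f and as="\<phi>1 t1 # map2 (\<lambda>\<phi> x. \<phi> x) \<phi>r tr" and sL=sL] f lR l\<phi>r ltr
      by (simp add: prodf_def)
    then show ?thesis
      by (simp add: tt \<phi>s \<beta>_def W_def lin_scale[OF mB_l1] mB_sB)
  qed
  have lhs: "f (map2 (\<lambda>g x. g x) (gs[0 := mu_bar \<Delta> \<mu> \<beta> (gs ! 0)]) s) =
      sum_list (map (\<lambda>p. sB (prodf \<phi>s (take 0 s @ fst p # snd p # drop (Suc 0) s)) V) (\<Delta> (s ! 0)))"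
    if s: "s \<in> set (itcop \<Delta> n' c)" for s
  proof -
    have ls: "length s = Suc n'" using itcop_len[OF s] .
    then obtain s0 sr where ss: "s = s0 # sr" by (cases s) auto
    have lsr: "length sr = n'" using ls ss by simp
    let ?Z = "map2 sL (map2 (\<lambda>\<phi> x. \<phi> x) \<phi>r sr) R"
    have lZ: "length ?Z = n'" using lsr lR l\<phi>r by simp
    have mb: "mu_bar \<Delta> \<mu> \<beta> g0 s0 = sum_list (map (\<lambda>p. sL (\<phi>0 (fst p) * \<phi>1 (snd p)) (\<mu> b v)) (\<Delta> s0))"
      by (simp add: mu_bar_def \<beta>_def g0_def lin_scale[OF mu_l1] lin_scale[OF mu_l2] mult.commute)
    have "map2 (\<lambda>g x. g x) (gs[0 := mu_bar \<Delta> \<mu> \<beta> (gs ! 0)]) s = mu_bar \<Delta> \<mu> \<beta> g0 s0 # ?Z"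
      using ss lsr lR l\<phi>r by (simp add: gs_def map2_scaled)
    then have "f (map2 (\<lambda>g x. g x) (gs[0 := mu_bar \<Delta> \<mu> \<beta> (gs ! 0)]) s) =
        sum_list (map (\<lambda>p. f (sL (\<phi>0 (fst p) * \<phi>1 (snd p)) (\<mu> b v) # ?Z)) (\<Delta> s0))"
      using lin_sum_list[OF ml_cons0[OF f lZ]] mb by simp
    also have "\<dots> = sum_list (map (\<lambda>p. sB (prodf \<phi>s (fst p # snd p # sr)) V) (\<Delta> s0))"
    proof (rule arg_cong[where f=sum_list], rule map_cong[OF refl])
      fix p :: "'c \<times> 'c"
      have "f (sL (\<phi>0 (fst p) * \<phi>1 (snd p)) (\<mu> b v) # ?Z) =
         f (map2 sL ((\<phi>0 (fst p) * \<phi>1 (snd p)) # map2 (\<lambda>\<phi> x. \<phi> x) \<phi>r sr) (\<mu> b v # R))" by simp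
      also have "\<dots> = sB ((\<phi>0 (fst p) * \<phi>1 (snd p)) * prodf \<phi>r sr) V"
        using ml_scaled_list[OF vsB, where ys="\<mu> b v # R" and f=f and sL=sL and as="(\<phi>0 (fst p) * \<phi>1 (snd p)) # map2 (\<lambda>\<phi> x. \<phi> x) \<phi>r sr"] f lR l\<phi>r lsr by (simp add: prodf_def V_def)
      finally show "f (sL (\<phi>0 (fst p) * \<phi>1 (snd p)) (\<mu> b v) # ?Z) = sB (prodf \<phi>s (fst p # snd p # sr)) V"
        by (simp add: \<phi>s mult.assoc)
    qed
    also have "\<dots> = sum_list (map (\<lambda>p. sB (prodf \<phi>s (take 0 s @ fst p # snd p # drop (Suc 0) s)) V) (\<Delta> (s ! 0)))"
      by (simp add: ss)
    finally show ?thesis .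
  qed
  have "sB S V = sum_list (map (\<lambda>t. sB (prodf \<phi>s t) V) (itcop \<Delta> (Suc n') c))"
    by (simp add: S_def scale_sum_list_left[OF vsB])
  also have "\<dots> = sum_list (map (\<lambda>s. sum_list (map (\<lambda>p. sB (prodf \<phi>s (take 0 s @ fst p # snd p # drop (Suc 0) s)) V) (\<Delta> (s ! 0)))) (itcop \<Delta> n' c))"
    unfolding itcop_Suc sum_split ..
  also have "\<dots> = induced \<Delta> f (gs[0 := mu_bar \<Delta> \<mu> \<beta> (gs ! 0)]) c"
    unfolding induced_def using lgs
    by (simp, intro arg_cong[where f=sum_list] map_cong[OF refl]) (simp add: lhs)
  also have "\<dots> = sum_list (map (\<lambda>t. sB (prodf \<phi>s t) W) (itcop \<Delta> (Suc n') c))"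
    unfolding H by (rule arg_cong[where f=sum_list], rule map_cong[OF refl]) (rule rhs)
  also have "\<dots> = sB S W"
    by (simp add: S_def scale_sum_list_left[OF vsB])
  finally have "sB S V = sB S W" .
  then show ?thesis using S by (simp add: S_def V_def W_def)
qed

end


theorem theorem1:
  fixes sC :: "'k::field \<Rightarrow> 'c::ab_group_add \<Rightarrow> 'c"
    and sL :: "'k \<Rightarrow> 'l::ab_group_add \<Rightarrow> 'l"
    and sB :: "'k \<Rightarrow> 'b::ab_group_add \<Rightarrow> 'b"
    and \<Delta> :: "'c \<Rightarrow> ('c \<times> 'c) list"
    and br :: "'l \<Rightarrow> 'l \<Rightarrow> 'l" and mB :: "'b \<Rightarrow> 'b \<Rightarrow> 'b"
    and \<mu> :: "'b \<Rightarrow> 'l \<Rightarrow> 'l" and \<psi> :: "'l \<Rightarrow> 'b \<Rightarrow> 'b"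
    and n :: nat and f :: "'l list \<Rightarrow> 'b"
  assumes "coalgebra sC \<Delta>"
    and "lie_rinehart sL sB br mB \<mu> \<psi>"
    and "Alt sL sB n f"
    and "hom_linear sC sL sB \<Delta> mB \<mu> n f"
  shows "hom_linear sC sL sB \<Delta> mB \<mu> (Suc n) (ce_diff sB br \<psi> f)"
proof -
  interpret LRP sC \<Delta> sL sB br mB \<mu> \<psi>
    using assms(1,2) by (simp add: LRP_def COAL_def LRP_axioms_def)
  have f: "multilinear sL sB n f" and sk: "skew n f" using assms(3) by (auto simp: Alt_def)
  show ?thesis unfolding hom_linear_def
  proof (intro allI impI, elim conjE)
    fix i \<beta> gs c
    assume i: "i < Suc n" and lg: "length gs = Suc n" and \<beta>: "Vector_Spaces.linear sC sB \<beta>"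
      and gs: "\<forall>g\<in>set gs. Vector_Spaces.linear sC sL g"
    show "induced \<Delta> (ce_diff sB br \<psi> f) (gs[i := mu_bar \<Delta> \<mu> \<beta> (gs ! i)]) c =
      sum_list (map (\<lambda>t. mB (\<beta> (t ! i)) (ce_diff sB br \<psi> f (map2 (\<lambda>g x. g x) gs (del i t)))) (itcop \<Delta> (Suc n) c))"
    proof (cases "degen n")
      case True
      show ?thesis by (rule main_deg[OF True f i lg \<beta> gs])
    next
      case False
      have fB: "f (ys[j := \<mu> b (ys ! j)]) = mB b (f ys)" if ys: "length ys = n" "j < n" for ys j b
      proof -
        obtain n' where n': "n = Suc n'" using ys by (cases n) auto
        have fB0: "f (\<mu> b v # R) = mB b (f (v # R))" if "Suc (length R) = n" for b v R
          using dich[of n' f R b v] f assms(4) False that n' by simp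
        show ?thesis by (rule f_B_slot[OF sk fB0 ys]) auto
      qed
      show ?thesis by (rule main_nondeg[OF f sk fB i lg \<beta> gs])
    qed
  qed
qed

end
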